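(* Let $\mathcal{M}$ be a matroid with set of bases $\mathcal{B}$. Then $\mathcal{M}$ is binary if and only if $\Delta_{\{B_1,B_2\}}\neq 3$ for every $B_1,B_2\in\mathcal{B}$.
   Context: A matroid is binary if it is representable over the field with two elements. For bases $B_1,B_2$ of $\mathcal{M}$, $\Delta_{\{B_1,B_2\}}$ is the number of unordered pairs $\{D_1,D_2\}$ with $D_1,D_2\in\mathcal{B}$ such that $D_1\cup D_2=B_1\cup B_2$ as multisets. *)

theory Defs
  imports Main "HOL-Library.Multiset" "HOL-Library.Z2"
begin

definition matroid_bases :: "'a set \<Rightarrow> 'a set set \<Rightarrow> bool" where
  "matroid_bases E \<B> \<longleftrightarrow> finite E \<and> \<B> \<noteq> {} \<and> (\<forall>B\<in>\<B>. B \<subseteq> E) \<and>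
     (\<forall>B1\<in>\<B>. \<forall>B2\<in>\<B>. \<forall>x\<in>B1 - B2. \<exists>y\<in>B2 - B1. insert y (B1 - {x}) \<in> \<B>)"

definition indep :: "'a set set \<Rightarrow> 'a set \<Rightarrow> bool" where
  "indep \<B> S \<longleftrightarrow> (\<exists>B\<in>\<B>. S \<subseteq> B)"

definition lin_indep_cols :: "('a \<Rightarrow> nat \<Rightarrow> 'f::comm_ring_1) \<Rightarrow> 'a set \<Rightarrow> bool" where
  "lin_indep_cols v S \<longleftrightarrow>
     (\<forall>c. (\<forall>i. (\<Sum>e\<in>S. c e * v e i) = 0) \<longrightarrow> (\<forall>e\<in>S. c e = 0))"

definition representable_over :: "'f::comm_ring_1 itself \<Rightarrow> 'a set \<Rightarrow> 'a set set \<Rightarrow> bool" where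
  "representable_over _ E \<B> \<longleftrightarrow>
     (\<exists>(m::nat) (v :: 'a \<Rightarrow> nat \<Rightarrow> 'f).
        (\<forall>e i. m \<le> i \<longrightarrow> v e i = 0) \<and>
        (\<forall>S. S \<subseteq> E \<longrightarrow> (indep \<B> S \<longleftrightarrow> lin_indep_cols v S)))"

text \<open>Binary: representable over GF(2), which is the type bit of HOL-Library.Z2.\<close>
definition binary_matroid :: "'a set \<Rightarrow> 'a set set \<Rightarrow> bool" where
  "binary_matroid E \<B> \<longleftrightarrow> representable_over TYPE(bit) E \<B>"

definition Delta :: "'a set set \<Rightarrow> 'a set \<Rightarrow> 'a set \<Rightarrow> nat" where
  "Delta \<B> B1 B2 = card {{D1, D2} | D1 D2. D1 \<in> \<B> \<and> D2 \<in> \<B> \<and>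
      mset_set D1 + mset_set D2 = mset_set B1 + mset_set B2}"

end

theory Submission
  imports Defs "HOL-Library.Function_Algebras" "HOL.Vector_Spaces"
begin


definition sc :: "bit \<Rightarrow> ('i \<Rightarrow> bit) \<Rightarrow> ('i \<Rightarrow> bit)" where
  "sc c f = (\<lambda>i. c * f i)"

interpretation V: vector_space "sc :: bit \<Rightarrow> ('i \<Rightarrow> bit) \<Rightarrow> ('i \<Rightarrow> bit)"
  by unfold_locales (auto simp: sc_def fun_eq_iff algebra_simps)

declare add_bit_eq_xor[simp del] mult_bit_eq_and[simp del]

lemma bit_add_self[simp]: "(x::bit) + x = 0" by (cases x) auto
lemma fun_add_self[simp]: "(f::'i\<Rightarrow>bit) + f = 0" by (auto simp: fun_eq_iff)

lemma sum_apply': "(sum f S) i = (\<Sum>x\<in>S. f x i)"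
proof (cases "finite S")
  case True then show ?thesis by (induction S rule: finite_induct) auto
qed auto

definition lic :: "('a \<Rightarrow> 'i \<Rightarrow> bit) \<Rightarrow> 'a set \<Rightarrow> bool" where
  "lic v S \<longleftrightarrow> (\<forall>c. (\<forall>i. (\<Sum>e\<in>S. c e * v e i) = 0) \<longrightarrow> (\<forall>e\<in>S. c e = 0))"

lemma lin_indep_cols_lic: "lin_indep_cols v S = lic v S"
  by (simp add: lin_indep_cols_def lic_def)

lemma sum_sc_apply: "(\<Sum>e\<in>S. sc (c e) (v e)) i = (\<Sum>e\<in>S. c e * v e i)"
  by (simp add: sum_apply' sc_def)

lemma lic_alt: "lic v S \<longleftrightarrow> (\<forall>c. (\<Sum>e\<in>S. sc (c e) (v e)) = 0 \<longrightarrow> (\<forall>e\<in>S. c e = 0))"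
  unfolding lic_def by (simp add: fun_eq_iff sum_sc_apply)

lemma lic_iff_indep:
  assumes "finite S"
  shows "lic v S \<longleftrightarrow> inj_on v S \<and> V.independent (v ` S)"
proof
  assume L: "lic v S"
  have inj: "inj_on v S"
  proof (rule inj_onI, rule ccontr)
    fix a b assume ab: "a \<in> S" "b \<in> S" "v a = v b" "a \<noteq> b"
    let ?c = "\<lambda>e. if e = a \<or> e = b then (1::bit) else 0"
    have "(\<Sum>e\<in>S. sc (?c e) (v e)) = (\<Sum>e\<in>{a,b}. sc (?c e) (v e))"
      using ab assms by (intro sum.mono_neutral_right) (auto simp: sc_def fun_eq_iff)
    also have "\<dots> = 0" using ab by (simp add: sc_def fun_eq_iff)
    finally have "\<forall>e\<in>S. ?c e = 0" using spec[OF L[unfolded lic_alt], of ?c] by blast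
    then have "?c a = 0" using ab by blast
    then show False by simp
  qed
  have "\<not> V.dependent (v ` S)"
  proof
    assume "V.dependent (v ` S)"
    then obtain u where u: "\<exists>x\<in>v`S. u x \<noteq> 0" "(\<Sum>x\<in>v`S. sc (u x) x) = 0"
      using V.dependent_finite[of "v`S"] assms by auto
    have "(\<Sum>e\<in>S. sc (u (v e)) (v e)) = 0"
      using u(2) sum.reindex[OF inj, of "\<lambda>x. sc (u x) x"] by simp
    then have "\<forall>e\<in>S. u (v e) = 0" using spec[OF L[unfolded lic_alt], of "\<lambda>e. u (v e)"] by blast
    with u(1) show False by auto
  qed
  with inj show "inj_on v S \<and> V.independent (v ` S)" by simp
next
  assume R: "inj_on v S \<and> V.independent (v ` S)"
  show "lic v S" unfolding lic_alt
  proof (intro allI impI ballI)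
    fix c e assume s: "(\<Sum>e\<in>S. sc (c e) (v e)) = 0" and e: "e \<in> S"
    let ?u = "\<lambda>x. c (the_inv_into S v x)"
    have "(\<Sum>x\<in>v`S. sc (?u x) x) = (\<Sum>e\<in>S. sc (?u (v e)) (v e))"
      using sum.reindex[of v S "\<lambda>x. sc (?u x) x"] R by simp
    also have "\<dots> = (\<Sum>e\<in>S. sc (c e) (v e))"
      using R by (intro sum.cong) (auto simp: the_inv_into_f_f)
    finally have "(\<Sum>x\<in>v`S. sc (?u x) x) = 0" using s by simp
    then have "\<forall>x\<in>v`S. ?u x = 0"
      using V.dependent_finite[of "v`S"] assms R by auto
    then show "c e = 0" using e R by (auto simp: the_inv_into_f_f)
  qed
qed

lemma lic_mono: assumes "lic v S" "T \<subseteq> S" "finite S" shows "lic v T"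
  unfolding lic_def
proof (intro allI impI ballI)
  fix c e assume h: "\<forall>i. (\<Sum>e\<in>T. c e * v e i) = 0" and e: "e \<in> T"
  let ?c = "\<lambda>x. if x \<in> T then c x else 0"
  have "\<forall>i. (\<Sum>e\<in>S. ?c e * v e i) = 0"
  proof
    fix i
    have "(\<Sum>e\<in>S. ?c e * v e i) = (\<Sum>e\<in>T. ?c e * v e i)"
      using assms by (intro sum.mono_neutral_right) auto
    then show "(\<Sum>e\<in>S. ?c e * v e i) = 0" using h by simp
  qed
  then have "\<forall>e\<in>S. ?c e = 0" using spec[OF assms(1)[unfolded lic_def], of ?c] by blast
  then have "?c e = 0" using assms e by blast
  then show "c e = 0" using e by simp
qed

lemma lic_cong: "(\<And>e. e \<in> S \<Longrightarrow> v e = w e) \<Longrightarrow> lic v S = lic w S"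
  unfolding lic_def by (metis (no_types, lifting) sum.cong)

lemma lic_insert:
  assumes "finite S" "x \<notin> S"
  shows "lic v (insert x S) \<longleftrightarrow> lic v S \<and> v x \<notin> V.span (v ` S)"
proof -
  have fin: "finite (insert x S)" using assms by simp
  show ?thesis
  proof
    assume L: "lic v (insert x S)"
    then have "lic v S" using lic_mono fin by blast
    moreover have "v x \<notin> V.span (v ` S)"
    proof
      assume sp: "v x \<in> V.span (v ` S)"
      from L fin have i: "inj_on v (insert x S)" "V.independent (v ` insert x S)"
        by (auto simp: lic_iff_indep)
      have "v x \<notin> v ` S" using i(1) assms(2) by (auto simp: inj_on_def)
      then have "v x \<in> V.span (v ` insert x S - {v x})" using sp by simp
      then have "V.dependent (v ` insert x S)" unfolding V.dependent_def by blast
      with i show False by simp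
    qed
    ultimately show "lic v S \<and> v x \<notin> V.span (v ` S)" by simp
  next
    assume R: "lic v S \<and> v x \<notin> V.span (v ` S)"
    then have i: "inj_on v S" "V.independent (v ` S)" using assms by (auto simp: lic_iff_indep)
    have nx: "v x \<notin> v ` S" using R V.span_base by blast
    have "V.independent (insert (v x) (v ` S))" using V.independent_insertI R i by blast
    moreover have "inj_on v (insert x S)" using i nx by auto
    ultimately show "lic v (insert x S)" using fin by (simp add: lic_iff_indep)
  qed
qed

lemma lic_bound:
  assumes "finite S" "finite T" "lic v S" "\<forall>e\<in>S. v e \<in> V.span (w ` T)"
  shows "card S \<le> card T"
proof -
  have i: "inj_on v S" "V.independent (v ` S)" using assms by (auto simp: lic_iff_indep)
  have "card (v ` S) \<le> card (w ` T)"
    using V.independent_span_bound[of "w ` T" "v ` S"] assms i by auto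
  also have "\<dots> \<le> card T" by (rule card_image_le[OF assms(2)])
  finally show ?thesis using card_image[OF i(1)] by simp
qed

lemma span_fam:
  assumes "finite T"
  shows "x \<in> V.span (w ` T) \<longleftrightarrow> (\<exists>c. x = (\<Sum>t\<in>T. sc (c t) (w t)))"
proof
  assume "x \<in> V.span (w ` T)"
  then show "\<exists>c. x = (\<Sum>t\<in>T. sc (c t) (w t))"
  proof (induction rule: V.span_induct_alt)
    case base
    show ?case by (rule exI[of _ "\<lambda>_. 0"]) (simp add: sc_def fun_eq_iff sum_apply')
  next
    case (step c x y)
    then obtain d where d: "y = (\<Sum>t\<in>T. sc (d t) (w t))" by blast
    from step obtain t0 where t0: "t0 \<in> T" "x = w t0" by blast
    let ?d = "d(t0 := d t0 + c)"
    have "(\<Sum>t\<in>T. sc (?d t) (w t)) = sc (?d t0) (w t0) + (\<Sum>t\<in>T-{t0}. sc (?d t) (w t))"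
      using t0 assms by (simp add: sum.remove)
    also have "(\<Sum>t\<in>T-{t0}. sc (?d t) (w t)) = (\<Sum>t\<in>T-{t0}. sc (d t) (w t))"
      by (intro sum.cong) auto
    also have "sc (?d t0) (w t0) = sc c x + sc (d t0) (w t0)" unfolding t0(2) sc_def
      by (rule ext) (simp only: fun_upd_same distrib_right add.commute plus_fun_apply)
    also have "sc c x + sc (d t0) (w t0) + (\<Sum>t\<in>T-{t0}. sc (d t) (w t)) = sc c x + y"
      using d t0 assms by (simp add: sum.remove add.assoc)
    finally show ?case by metis
  qed
next
  assume "\<exists>c. x = (\<Sum>t\<in>T. sc (c t) (w t))"
  then obtain c where "x = (\<Sum>t\<in>T. sc (c t) (w t))" by blast
  then show "x \<in> V.span (w ` T)"
    by (simp add: V.span_sum V.span_scale V.span_base)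
qed

definition unitv :: "'i \<Rightarrow> 'i \<Rightarrow> bit" where
  "unitv b = (\<lambda>i. if i = b then 1 else 0)"

lemma sc_sum_left: "sc (\<Sum>x\<in>A. f x) v = (\<Sum>x\<in>A. sc (f x) v)"
  by (simp add: sc_def fun_eq_iff sum_apply' sum_distrib_right)

lemma sc_sum_right: "sc c (\<Sum>x\<in>A. f x) = (\<Sum>x\<in>A. sc c (f x))"
  by (simp add: sc_def fun_eq_iff sum_apply' sum_distrib_left)

lemma sc_sc: "sc a (sc b v) = sc (a * b) v"
  by (simp add: sc_def fun_eq_iff mult.assoc)

lemma sum_units: "finite T \<Longrightarrow> (\<forall>i. i \<notin> T \<longrightarrow> f i = 0) \<Longrightarrow> f = (\<Sum>t\<in>T. sc (f t) (unitv t))"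
  by (auto simp: fun_eq_iff sum_apply' sc_def unitv_def if_distrib cong: if_cong)

lemma span_units:
  assumes "finite T"
  shows "V.span (unitv ` T) = {f. \<forall>i. i \<notin> T \<longrightarrow> f i = 0}"
proof
  have "V.subspace {f::'a\<Rightarrow>bit. \<forall>i. i \<notin> T \<longrightarrow> f i = 0}"
    unfolding V.subspace_def by (auto simp: sc_def)
  moreover have "unitv ` T \<subseteq> {f. \<forall>i. i \<notin> T \<longrightarrow> f i = 0}"
    by (auto simp: unitv_def)
  ultimately show "V.span (unitv ` T) \<subseteq> {f. \<forall>i. i \<notin> T \<longrightarrow> f i = 0}"
    by (rule V.span_minimal[rotated])
next
  show "{f. \<forall>i. i \<notin> T \<longrightarrow> f i = 0} \<subseteq> V.span (unitv ` T)"
  proof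
    fix f :: "'a \<Rightarrow> bit" assume "f \<in> {f. \<forall>i. i \<notin> T \<longrightarrow> f i = 0}"
    then have "f = (\<Sum>t\<in>T. sc (f t) (unitv t))" using sum_units assms by blast
    then show "f \<in> V.span (unitv ` T)" using span_fam[OF assms] by blast
  qed
qed

lemma lic_units:
  assumes "\<forall>b\<in>T. w b = unitv b" "finite T"
  shows "lic w T"
  unfolding lic_def
proof (intro allI impI ballI)
  fix c e assume h: "\<forall>i. (\<Sum>e\<in>T. c e * w e i) = 0" and e: "e \<in> T"
  have "(\<Sum>x\<in>T. c x * w x e) = (\<Sum>x\<in>T. if x = e then c x else 0)"
    using assms by (intro sum.cong) (auto simp: unitv_def)
  also have "\<dots> = c e" using e assms by simp
  finally show "c e = 0" using h by metis
qed

lemma lic_k1: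
  assumes "finite B" "x \<in> B" "y \<notin> B" "\<forall>b\<in>B. g b = unitv b" "\<forall>i. i \<notin> B \<longrightarrow> g y i = 0"
  shows "lic g (insert y (B - {x})) \<longleftrightarrow> g y x \<noteq> 0"
proof -
  have fin: "finite (B - {x})" using assms by simp
  have "lic g (B - {x})" using lic_units[of "B - {x}" g] assms by auto
  moreover have "g ` (B - {x}) = unitv ` (B - {x})" using assms by auto
  ultimately have "lic g (insert y (B - {x})) \<longleftrightarrow> g y \<notin> V.span (unitv ` (B - {x}))"
    using lic_insert[OF fin, of y g] assms by auto
  also have "\<dots> \<longleftrightarrow> g y x \<noteq> 0" using span_units[OF fin] assms by auto
  finally show ?thesis .
qed

lemma coeff_unique:
  assumes "lic w T" "finite T" "(\<Sum>t\<in>T. sc (c t) (w t)) = (\<Sum>t\<in>T. sc (d t) (w t))"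
  shows "\<forall>t\<in>T. c t = d t"
proof -
  have "(\<Sum>t\<in>T. sc (c t + d t) (w t)) = (\<Sum>t\<in>T. sc (c t) (w t)) + (\<Sum>t\<in>T. sc (d t) (w t))"
    by (simp add: sum.distrib[symmetric] sc_def fun_eq_iff distrib_right sum_apply')
  also have "\<dots> = 0" using assms(3) by simp
  finally have "\<forall>t\<in>T. c t + d t = 0" using spec[OF assms(1)[unfolded lic_alt], of "\<lambda>t. c t + d t"] by blast
  then show ?thesis by (metis add_diff_cancel_left' add.right_neutral minus_bit_def)
qed

lemma lic_change:
  assumes "lic w B2" "finite B2" "finite S"
    and supp: "\<forall>e\<in>S. \<forall>b. b \<notin> B2 \<longrightarrow> g e b = 0"
    and rep: "\<forall>e\<in>S. w e = (\<Sum>b\<in>B2. sc (g e b) (w b))"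
  shows "lic w S \<longleftrightarrow> lic g S"
proof -
  have key: "(\<Sum>e\<in>S. sc (c e) (w e)) = (\<Sum>b\<in>B2. sc (\<Sum>e\<in>S. c e * g e b) (w b))" for c
  proof -
    have "(\<Sum>e\<in>S. sc (c e) (w e)) = (\<Sum>e\<in>S. \<Sum>b\<in>B2. sc (c e * g e b) (w b))"
      using rep by (intro sum.cong) (auto simp: sc_sum_right sc_sc)
    also have "\<dots> = (\<Sum>b\<in>B2. \<Sum>e\<in>S. sc (c e * g e b) (w b))" by (rule sum.swap)
    also have "\<dots> = (\<Sum>b\<in>B2. sc (\<Sum>e\<in>S. c e * g e b) (w b))" by (simp add: sc_sum_left)
    finally show ?thesis .
  qed
  have eq: "(\<Sum>e\<in>S. sc (c e) (w e)) = 0 \<longleftrightarrow> (\<Sum>e\<in>S. sc (c e) (g e)) = 0" for c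
  proof -
    have "(\<Sum>e\<in>S. sc (c e) (w e)) = 0 \<longleftrightarrow> (\<forall>b\<in>B2. (\<Sum>e\<in>S. c e * g e b) = 0)"
    proof
      assume "(\<Sum>e\<in>S. sc (c e) (w e)) = 0"
      then have "(\<Sum>b\<in>B2. sc (\<Sum>e\<in>S. c e * g e b) (w b)) = (\<Sum>b\<in>B2. sc 0 (w b))"
        using key by (simp add: sc_def fun_eq_iff sum_apply')
      then show "\<forall>b\<in>B2. (\<Sum>e\<in>S. c e * g e b) = 0"
        using coeff_unique[OF assms(1,2), of "\<lambda>b. \<Sum>e\<in>S. c e * g e b" "\<lambda>b. 0"] by blast
    next
      assume "\<forall>b\<in>B2. (\<Sum>e\<in>S. c e * g e b) = 0"
      then show "(\<Sum>e\<in>S. sc (c e) (w e)) = 0"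
        using key by (simp add: sc_def fun_eq_iff sum_apply')
    qed
    also have "\<dots> \<longleftrightarrow> (\<forall>i. (\<Sum>e\<in>S. c e * g e i) = 0)"
      using supp by auto
    also have "\<dots> \<longleftrightarrow> (\<Sum>e\<in>S. sc (c e) (g e)) = 0"
      by (simp add: fun_eq_iff sum_sc_apply)
    finally show ?thesis .
  qed
  show ?thesis unfolding lic_alt using eq by simp
qed




context
  fixes E :: "'a set" and \<B> :: "'a set set"
  assumes M: "matroid_bases E \<B>"
begin

lemma base_sub: "B \<in> \<B> \<Longrightarrow> B \<subseteq> E"
  using M unfolding matroid_bases_def by blast

lemma finE: "finite E" using M unfolding matroid_bases_def by blast

lemma base_fin: "B \<in> \<B> \<Longrightarrow> finite B"
  using base_sub finE finite_subset by blast

lemma exch: "B1 \<in> \<B> \<Longrightarrow> B2 \<in> \<B> \<Longrightarrow> x \<in> B1 - B2 \<Longrightarrow> \<exists>y\<in>B2 - B1. insert y (B1 - {x}) \<in> \<B>"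
  using M unfolding matroid_bases_def by blast

lemma ne: "\<B> \<noteq> {}" using M unfolding matroid_bases_def by blast

lemma card_le_aux: "card (B1 - B2) = n \<Longrightarrow> B1 \<in> \<B> \<Longrightarrow> B2 \<in> \<B> \<Longrightarrow> card B1 \<le> card B2"
proof (induction n arbitrary: B1)
  case 0
  then have "B1 \<subseteq> B2" using base_fin[of B1] by auto
  then show ?case using card_mono base_fin 0 by blast
next
  case (Suc n)
  then obtain x where x: "x \<in> B1 - B2" by (metis card.empty empty_iff nat.distinct(1) subsetI subset_antisym)
  then obtain y where y: "y \<in> B2 - B1" "insert y (B1 - {x}) \<in> \<B>" using exch Suc by blast
  let ?B = "insert y (B1 - {x})"
  have f: "finite B1" using base_fin Suc by blast
  have "?B - B2 = (B1 - B2) - {x}" using y x by auto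
  then have "card (?B - B2) = n" using Suc x f by simp
  then have "card ?B \<le> card B2" using Suc y by blast
  moreover have "card B1 > 0" using x f card_gt_0_iff by blast
  moreover have "card ?B = card B1" using x y f \<open>card B1 > 0\<close> by (simp add: card.insert_remove)
  ultimately show ?case by simp
qed

lemma card_eq: "B1 \<in> \<B> \<Longrightarrow> B2 \<in> \<B> \<Longrightarrow> card B1 = card B2"
  using card_le_aux by (meson le_antisym)

lemma indep_card: "indep \<B> S \<Longrightarrow> B \<in> \<B> \<Longrightarrow> card S \<le> card B"
  unfolding indep_def by (metis base_fin card_eq card_mono)

lemma indep_base: "indep \<B> S \<Longrightarrow> B \<in> \<B> \<Longrightarrow> card S = card B \<Longrightarrow> S \<in> \<B>"
  unfolding indep_def by (metis base_fin card_eq card_subset_eq)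

lemma mset_eq_iff:
  assumes "finite D1" "finite D2" "finite B1" "finite B2"
  shows "mset_set D1 + mset_set D2 = mset_set B1 + mset_set B2 \<longleftrightarrow>
         D1 \<inter> D2 = B1 \<inter> B2 \<and> D1 \<union> D2 = B1 \<union> B2"
proof -
  have "mset_set D1 + mset_set D2 = mset_set B1 + mset_set B2 \<longleftrightarrow>
    (\<forall>x. (if x \<in> D1 then 1 else 0) + (if x \<in> D2 then 1 else 0) =
         (if x \<in> B1 then 1 else (0::nat)) + (if x \<in> B2 then 1 else 0))"
    using assms by (simp add: multiset_eq_iff count_mset_set')
  also have "\<dots> \<longleftrightarrow> D1 \<inter> D2 = B1 \<inter> B2 \<and> D1 \<union> D2 = B1 \<union> B2"
  proof
    assume h: "\<forall>x. (if x \<in> D1 then 1 else 0) + (if x \<in> D2 then 1 else 0) =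
         (if x \<in> B1 then 1 else (0::nat)) + (if x \<in> B2 then 1 else 0)"
    have "x \<in> D1 \<and> x \<in> D2 \<longleftrightarrow> x \<in> B1 \<and> x \<in> B2" for x
      using h[rule_format, of x] by (auto split: if_splits)
    moreover have "x \<in> D1 \<or> x \<in> D2 \<longleftrightarrow> x \<in> B1 \<or> x \<in> B2" for x
      using h[rule_format, of x] by (auto split: if_splits)
    ultimately show "D1 \<inter> D2 = B1 \<inter> B2 \<and> D1 \<union> D2 = B1 \<union> B2" by blast
  next
    assume h: "D1 \<inter> D2 = B1 \<inter> B2 \<and> D1 \<union> D2 = B1 \<union> B2"
    show "\<forall>x. (if x \<in> D1 then 1 else 0) + (if x \<in> D2 then 1 else 0) =
         (if x \<in> B1 then 1 else (0::nat)) + (if x \<in> B2 then 1 else 0)"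
    proof
      fix x
      have "x \<in> D1 \<and> x \<in> D2 \<longleftrightarrow> x \<in> B1 \<and> x \<in> B2" "x \<in> D1 \<or> x \<in> D2 \<longleftrightarrow> x \<in> B1 \<or> x \<in> B2"
        using h by blast+
      then show "(if x \<in> D1 then 1 else 0) + (if x \<in> D2 then 1 else 0) =
         (if x \<in> B1 then 1 else (0::nat)) + (if x \<in> B2 then 1 else 0)" by auto
    qed
  qed
  finally show ?thesis .
qed

lemma Delta_alt:
  assumes "B1 \<in> \<B>" "B2 \<in> \<B>"
  shows "Delta \<B> B1 B2 = card {{D1, D2} | D1 D2. D1 \<in> \<B> \<and> D2 \<in> \<B> \<and>
      D1 \<inter> D2 = B1 \<inter> B2 \<and> D1 \<union> D2 = B1 \<union> B2}"
proof -
  have eqv: "D1 \<in> \<B> \<Longrightarrow> D2 \<in> \<B> \<Longrightarrow> (mset_set D1 + mset_set D2 = mset_set B1 + mset_set B2 \<longleftrightarrow>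
         D1 \<inter> D2 = B1 \<inter> B2 \<and> D1 \<union> D2 = B1 \<union> B2)" for D1 D2
    using mset_eq_iff[of D1 D2 B1 B2] base_fin assms by blast
  have "(\<exists>D1 D2. P = {D1, D2} \<and> D1 \<in> \<B> \<and> D2 \<in> \<B> \<and> mset_set D1 + mset_set D2 = mset_set B1 + mset_set B2)
     \<longleftrightarrow> (\<exists>D1 D2. P = {D1, D2} \<and> D1 \<in> \<B> \<and> D2 \<in> \<B> \<and> D1 \<inter> D2 = B1 \<inter> B2 \<and> D1 \<union> D2 = B1 \<union> B2)" for P
  proof
    assume "\<exists>D1 D2. P = {D1, D2} \<and> D1 \<in> \<B> \<and> D2 \<in> \<B> \<and> mset_set D1 + mset_set D2 = mset_set B1 + mset_set B2"
    then obtain D1 D2 where h: "P = {D1, D2}" "D1 \<in> \<B>" "D2 \<in> \<B>" "mset_set D1 + mset_set D2 = mset_set B1 + mset_set B2"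
      by blast
    then have "D1 \<inter> D2 = B1 \<inter> B2 \<and> D1 \<union> D2 = B1 \<union> B2" using eqv by blast
    then show "\<exists>D1 D2. P = {D1, D2} \<and> D1 \<in> \<B> \<and> D2 \<in> \<B> \<and> D1 \<inter> D2 = B1 \<inter> B2 \<and> D1 \<union> D2 = B1 \<union> B2"
      using h by blast
  next
    assume "\<exists>D1 D2. P = {D1, D2} \<and> D1 \<in> \<B> \<and> D2 \<in> \<B> \<and> D1 \<inter> D2 = B1 \<inter> B2 \<and> D1 \<union> D2 = B1 \<union> B2"
    then obtain D1 D2 where h: "P = {D1, D2}" "D1 \<in> \<B>" "D2 \<in> \<B>" "D1 \<inter> D2 = B1 \<inter> B2 \<and> D1 \<union> D2 = B1 \<union> B2"
      by blast
    then have "mset_set D1 + mset_set D2 = mset_set B1 + mset_set B2" using eqv by blast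
    then show "\<exists>D1 D2. P = {D1, D2} \<and> D1 \<in> \<B> \<and> D2 \<in> \<B> \<and> mset_set D1 + mset_set D2 = mset_set B1 + mset_set B2"
      using h by blast
  qed
  then show ?thesis unfolding Delta_def by (intro arg_cong[where f=card] Collect_cong) simp
qed

lemma Delta_Z:
  assumes B1: "B1 \<in> \<B>" and B2: "B2 \<in> \<B>" and p0: "p0 \<in> B1 - B2"
  defines "C \<equiv> B1 \<inter> B2" and "G \<equiv> (B1 \<union> B2) - (B1 \<inter> B2)"
  shows "Delta \<B> B1 B2 = card {Z. Z \<subseteq> G \<and> p0 \<in> Z \<and> C \<union> Z \<in> \<B> \<and> C \<union> (G - Z) \<in> \<B>}"
proof -
  let ?ZS = "{Z. Z \<subseteq> G \<and> p0 \<in> Z \<and> C \<union> Z \<in> \<B> \<and> C \<union> (G - Z) \<in> \<B>}"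
  let ?PS = "{{D1, D2} | D1 D2. D1 \<in> \<B> \<and> D2 \<in> \<B> \<and> D1 \<inter> D2 = B1 \<inter> B2 \<and> D1 \<union> D2 = B1 \<union> B2}"
  let ?f = "\<lambda>Z. {C \<union> Z, C \<union> (G - Z)}"
  have inj: "inj_on ?f ?ZS"
  proof (rule inj_onI)
    fix Z1 Z2 assume z1: "Z1 \<in> ?ZS" and z2: "Z2 \<in> ?ZS" and eq: "?f Z1 = ?f Z2"
    have "p0 \<notin> C \<union> (G - Z2)" using z2 p0 C_def by auto
    moreover have "C \<union> Z1 \<in> {C \<union> Z2, C \<union> (G - Z2)}" using eq by (metis insertI1)
    moreover have "p0 \<in> C \<union> Z1" using z1 by blast
    ultimately have "C \<union> Z1 = C \<union> Z2" by blast
    moreover have "C \<inter> G = {}" using C_def G_def by auto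
    ultimately show "Z1 = Z2" using z1 z2 by blast
  qed
  have img: "?f ` ?ZS = ?PS"
  proof
    show "?f ` ?ZS \<subseteq> ?PS"
    proof
      fix P assume "P \<in> ?f ` ?ZS"
      then obtain Z where Z: "Z \<in> ?ZS" "P = ?f Z" by blast
      have "(C \<union> Z) \<inter> (C \<union> (G - Z)) = B1 \<inter> B2" "(C \<union> Z) \<union> (C \<union> (G - Z)) = B1 \<union> B2"
        using Z(1) by (auto simp: C_def G_def)
      then show "P \<in> ?PS" using Z by blast
    qed
  next
    show "?PS \<subseteq> ?f ` ?ZS"
    proof
      fix P assume "P \<in> ?PS"
      then obtain D1 D2 where D: "P = {D1, D2}" "D1 \<in> \<B>" "D2 \<in> \<B>" "D1 \<inter> D2 = B1 \<inter> B2" "D1 \<union> D2 = B1 \<union> B2"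
        by blast
      have main: "P \<in> ?f ` ?ZS" if "P = {D1', D2'}" "D1' \<in> \<B>" "D2' \<in> \<B>" "D1' \<inter> D2' = B1 \<inter> B2"
          "D1' \<union> D2' = B1 \<union> B2" "p0 \<in> D1'" for D1' D2'
      proof -
        let ?Z = "D1' - C"
        have "C \<union> ?Z = D1'" "C \<union> (G - ?Z) = D2'" using that by (auto simp: C_def G_def)
        moreover have "?Z \<subseteq> G" "p0 \<in> ?Z" using that p0 by (auto simp: C_def G_def)
        ultimately have "?Z \<in> ?ZS" using that by auto
        moreover have "P = ?f ?Z" using that \<open>C \<union> ?Z = D1'\<close> \<open>C \<union> (G - ?Z) = D2'\<close> by simp
        ultimately show ?thesis by blast
      qed
      have "p0 \<in> D1 \<or> p0 \<in> D2" using D p0 by blast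
      then show "P \<in> ?f ` ?ZS"
      proof
        assume "p0 \<in> D1" then show ?thesis using main[of D1 D2] D by blast
      next
        assume "p0 \<in> D2"
        moreover have "P = {D2, D1}" using D(1) by (simp add: insert_commute)
        ultimately show ?thesis using main[of D2 D1] D(2-5) by blast
      qed
    qed
  qed
  have "Delta \<B> B1 B2 = card ?PS" using Delta_alt[OF B1 B2] by simp
  also have "\<dots> = card ?ZS" by (subst img[symmetric]) (rule card_image[OF inj])
  finally show ?thesis .
qed

end



lemma of_nat_bit_0: "(of_nat n :: bit) = 0 \<longleftrightarrow> even n"
proof (induction n)
  case (Suc n) then show ?case by (cases "of_nat n :: bit") (auto simp: add_bit_eq_xor)
qed simp

lemma card_filter_bit: "finite A \<Longrightarrow> (of_nat (card {x\<in>A. P x}) :: bit) = (\<Sum>x\<in>A. if P x then 1 else 0)"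
proof -
  assume f: "finite A"
  have "(of_nat (card {x\<in>A. P x}) :: bit) = (\<Sum>x\<in>{x\<in>A. P x}. 1)" by simp
  also have "\<dots> = (\<Sum>x\<in>A. if P x then 1 else 0)" using sum.inter_filter[OF f, of "\<lambda>_. 1::bit" P] by simp
  finally show ?thesis .
qed

lemma fun_minus_bit: "(f::'i\<Rightarrow>bit) - g = f + g"
  by (simp add: fun_eq_iff)

lemma even_invol:
  assumes "finite S" "\<forall>x\<in>S. f x \<in> S \<and> f x \<noteq> x \<and> f (f x) = x"
  shows "even (card S)"
  using assms
proof (induction "card S" arbitrary: S rule: less_induct)
  case less
  show ?case
  proof (cases "S = {}")
    case False
    then obtain x where x: "x \<in> S" by blast
    let ?S = "S - {x, f x}"
    have fx: "f x \<in> S" "f x \<noteq> x" using less x by auto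
    have "\<forall>y\<in>?S. f y \<in> ?S \<and> f y \<noteq> y \<and> f (f y) = y"
    proof
      fix y assume y: "y \<in> ?S"
      then have "f y \<in> S" "f y \<noteq> y" "f (f y) = y" using less by auto
      moreover have "f y \<noteq> x" using y \<open>f (f y) = y\<close> by auto
      moreover have "f y \<noteq> f x"
      proof
        assume "f y = f x" then have "f (f y) = f (f x)" by simp
        then show False using y \<open>f (f y) = y\<close> less(3) x by auto
      qed
      ultimately show "f y \<in> ?S \<and> f y \<noteq> y \<and> f (f y) = y" by auto
    qed
    have "card {x, f x} = 2" using fx by simp
    moreover have "card ?S = card S - 2" using x fx less \<open>card {x, f x} = 2\<close> by (simp add: card_Diff_subset)
    moreover have "{x, f x} \<subseteq> S" using x fx by blast
    ultimately have c2: "card S \<ge> 2" using card_mono[OF less(2)] by metis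
    have "card ?S < card S" using \<open>card ?S = card S - 2\<close> c2 by simp
    then have "even (card ?S)" using less(1)[of ?S] less(2) \<open>\<forall>y\<in>?S. _\<close> by blast
    then show ?thesis using c2 \<open>card ?S = card S - 2\<close>
      by (metis le_add_diff_inverse2 even_add dvd_refl)
  qed simp
qed

lemma lic_reindex:
  assumes "inj_on h S" "finite S"
  shows "lic (\<lambda>e. v (h e)) S \<longleftrightarrow> lic v (h ` S)"
proof -
  have "inj_on (\<lambda>e. v (h e)) S \<longleftrightarrow> inj_on v (h ` S)"
    using comp_inj_on_iff[OF assms(1), of v] by (simp add: o_def)
  moreover have "(\<lambda>e. v (h e)) ` S = v ` (h ` S)" by auto
  ultimately show ?thesis using assms by (simp add: lic_iff_indep)
qed

lemma bit_aba: "(a::bit) + b + a = b" by (cases a; cases b) (simp_all add: add_bit_eq_xor)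

definition ind :: "bool \<Rightarrow> bit" where "ind b = (if b then 1 else 0)"

lemma hyperplane:
  assumes fB: "finite B1" and lB: "lic v B1" and fS: "finite S" and q0: "q0 \<in> S"
    and cS: "card S = card B1"
    and aS: "\<forall>e\<in>S-{q0}. a e \<in> V.span (v ` B1)"
    and x: "x \<in> V.span (v ` B1)" and y: "y \<in> V.span (v ` B1)"
  shows "ind (lic (a(q0:=x+y)) S) = ind (lic (a(q0:=x)) S) + ind (lic (a(q0:=y)) S)"
proof -
  let ?S = "S - {q0}"
  have Seq: "S = insert q0 ?S" using q0 by auto
  have fS': "finite ?S" using fS by simp
  have char: "lic (a(q0:=z)) S \<longleftrightarrow> lic a ?S \<and> z \<notin> V.span (a ` ?S)" for z
  proof -
    have "lic (a(q0:=z)) S \<longleftrightarrow> lic (a(q0:=z)) ?S \<and> (a(q0:=z)) q0 \<notin> V.span ((a(q0:=z)) ` ?S)"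
      using lic_insert[OF fS', of q0 "a(q0:=z)"] Seq by simp
    moreover have "lic (a(q0:=z)) ?S = lic a ?S" by (rule lic_cong) auto
    moreover have "(a(q0:=z)) ` ?S = a ` ?S" by auto
    ultimately show ?thesis by simp
  qed
  show ?thesis
  proof (cases "lic a ?S")
    case False then show ?thesis using char by (simp add: ind_def)
  next
    case True
    let ?H = "V.span (a ` ?S)"
    have addH: "u \<in> ?H \<Longrightarrow> w \<in> ?H \<Longrightarrow> u + w \<in> ?H" for u w by (rule V.span_add)
    have xx: "(u::'b\<Rightarrow>bit) + w + u = w" for u w by (simp add: fun_eq_iff bit_aba)
    have key: "x + y \<notin> ?H \<longleftrightarrow> (x \<notin> ?H \<longleftrightarrow> y \<in> ?H)"
    proof (cases "x \<in> ?H")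
      case True
      then show ?thesis using addH[of "x+y" x] addH[of x y] by (auto simp: xx)
    next
      case xH: False
      show ?thesis
      proof (cases "y \<in> ?H")
        case True
        then show ?thesis using addH[of "x+y" y] xH by (auto simp: add.assoc)
      next
        case yH: False
        have lx: "lic (a(q0:=x)) S" using char True xH by simp
        have "y \<in> V.span ((a(q0:=x)) ` S)"
        proof (rule ccontr)
          assume ny: "y \<notin> V.span ((a(q0:=x)) ` S)"
          have i: "inj_on (a(q0:=x)) S" "V.independent ((a(q0:=x)) ` S)"
            using lx fS by (auto simp: lic_iff_indep)
          have ny': "y \<notin> (a(q0:=x)) ` S" using ny V.span_base by blast
          have ind2: "V.independent (insert y ((a(q0:=x)) ` S))"
            using V.independent_insertI[OF ny i(2)] .
          have sub: "insert y ((a(q0:=x)) ` S) \<subseteq> V.span (v ` B1)" using aS x y by auto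
          have "card (insert y ((a(q0:=x)) ` S)) \<le> card (v ` B1)"
            using V.independent_span_bound[OF _ ind2 sub] fB by simp
          also have "\<dots> \<le> card B1" using card_image_le[OF fB] .
          finally have "Suc (card S) \<le> card B1"
            using ny' card_image[OF i(1)] fS by simp
          then show False using cS by simp
        qed
        moreover have "(a(q0:=x)) ` S = insert x (a ` ?S)" using Seq by auto
        ultimately have "y \<in> V.span (insert x (a ` ?S))" by simp
        then obtain kk where kk: "y - sc kk x \<in> ?H" using V.span_breakdown_eq by blast
        have "kk \<noteq> 0"
        proof
          assume "kk = 0"
          moreover have "sc 0 x = 0" by (simp add: sc_def fun_eq_iff)
          ultimately have "y \<in> ?H" using kk by simp
          with yH show False by simp
        qed
        then have "kk = 1" by simp
        then have "y + x \<in> ?H" using kk by (simp add: sc_def fun_minus_bit)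
        then have "x + y \<in> ?H" by (simp add: add.commute)
        then show ?thesis using xH yH by simp
      qed
    qed
    show ?thesis using char True key by (auto simp: ind_def)
  qed
qed




definition ZS :: "('a \<Rightarrow> 'i \<Rightarrow> bit) \<Rightarrow> 'a set \<Rightarrow> 'a set \<Rightarrow> 'a \<Rightarrow> nat \<Rightarrow> 'a set set" where
  "ZS a C G p0 k = {Z. Z \<subseteq> G \<and> p0 \<in> Z \<and> card Z = k \<and> lic a (C \<union> Z) \<and> lic a (C \<union> (G - Z))}"

context
  fixes v :: "'a \<Rightarrow> 'i \<Rightarrow> bit" and B1 C Q :: "'a set" and p0 p1 :: 'a and k :: nat
  assumes fB1: "finite B1" and lB1: "lic v B1" and CB: "C \<subseteq> B1" and p0: "p0 \<in> B1 - C"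
    and p1: "p1 \<in> B1 - C" and p01: "p0 \<noteq> p1" and fQ: "finite Q" and QB: "Q \<inter> B1 = {}"
    and kP: "card (B1 - C) = k" and kQ: "card Q = k"
begin

abbreviation "G \<equiv> (B1 - C) \<union> Q"

lemma finG: "finite G" using fB1 fQ by simp

lemma CG: "C \<inter> G = {}" using CB QB by blast

lemma finC: "finite C" using fB1 CB finite_subset by blast

lemma cardB1: "card B1 = card C + k"
proof -
  have "card (B1 - C) = card B1 - card C" using card_Diff_subset[OF finC CB] .
  moreover have "card C \<le> card B1" using card_mono[OF fB1 CB] .
  ultimately show ?thesis using kP by simp
qed

lemma cardG: "card G = 2 * k"
proof -
  have "(B1 - C) \<inter> Q = {}" using QB by blast
  then have "card G = card (B1 - C) + card Q" using fB1 fQ by (simp add: card_Un_disjoint)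
  then show ?thesis using kP kQ by simp
qed

lemma card_CZ: "Z \<subseteq> G \<Longrightarrow> card Z = k \<Longrightarrow> card (C \<union> Z) = card B1"
proof -
  assume Z: "Z \<subseteq> G" "card Z = k"
  have "finite Z" using Z finG finite_subset by blast
  moreover have "C \<inter> Z = {}" using CG Z by blast
  ultimately have "card (C \<union> Z) = card C + card Z" using finC by (simp add: card_Un_disjoint)
  then show ?thesis using Z cardB1 by simp
qed

lemma card_CGZ: "Z \<subseteq> G \<Longrightarrow> card Z = k \<Longrightarrow> card (C \<union> (G - Z)) = card B1"
proof -
  assume "Z \<subseteq> G" "card Z = k"
  then have "card (G - Z) = k" using cardG finG by (simp add: card_Diff_subset finite_subset)
  then show ?thesis using card_CZ[of "G - Z"] by blast
qed

lemma ZS_fin: "finite (ZS a C G p0 k)"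
proof -
  have "ZS a C G p0 k \<subseteq> Pow G" unfolding ZS_def by auto
  then show ?thesis using finG finite_subset by blast
qed

lemma ZS_bit:
  "(of_nat (card (ZS a C G p0 k)) :: bit) =
   (\<Sum>Z\<in>{Z. Z \<subseteq> G \<and> p0 \<in> Z \<and> card Z = k}. ind (lic a (C \<union> Z)) * ind (lic a (C \<union> (G - Z))))"
proof -
  let ?Zs = "{Z. Z \<subseteq> G \<and> p0 \<in> Z \<and> card Z = k}"
  have fZs: "finite ?Zs" by (rule finite_subset[of _ "Pow G"]) (auto simp: fB1 fQ)
  have "ZS a C G p0 k = {Z \<in> ?Zs. lic a (C \<union> Z) \<and> lic a (C \<union> (G - Z))}"
    unfolding ZS_def by auto
  then have "(of_nat (card (ZS a C G p0 k)) :: bit) = (\<Sum>Z\<in>?Zs. if lic a (C \<union> Z) \<and> lic a (C \<union> (G - Z)) then 1 else 0)"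
    using card_filter_bit[OF fZs] by simp
  also have "\<dots> = (\<Sum>Z\<in>?Zs. ind (lic a (C \<union> Z)) * ind (lic a (C \<union> (G - Z))))"
    by (intro sum.cong) (auto simp: ind_def)
  finally show ?thesis .
qed

lemma ZS_add:
  assumes q0: "q0 \<in> Q" and aS: "\<forall>e\<in>(C \<union> G) - {q0}. a e \<in> V.span (v ` B1)"
    and x: "x \<in> V.span (v ` B1)" and y: "y \<in> V.span (v ` B1)"
  shows "(of_nat (card (ZS (a(q0:=x+y)) C G p0 k)) :: bit) =
         of_nat (card (ZS (a(q0:=x)) C G p0 k)) + of_nat (card (ZS (a(q0:=y)) C G p0 k))"
proof -
  let ?Zs = "{Z. Z \<subseteq> G \<and> p0 \<in> Z \<and> card Z = k}"
  have trm: "ind (lic (a(q0:=x+y)) (C \<union> Z)) * ind (lic (a(q0:=x+y)) (C \<union> (G - Z))) =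
       ind (lic (a(q0:=x)) (C \<union> Z)) * ind (lic (a(q0:=x)) (C \<union> (G - Z))) +
       ind (lic (a(q0:=y)) (C \<union> Z)) * ind (lic (a(q0:=y)) (C \<union> (G - Z)))" if Z: "Z \<in> ?Zs" for Z
  proof -
    have fin1: "finite (C \<union> Z)" "finite (C \<union> (G - Z))" using Z finG fB1 CB finite_subset by auto
    have c1: "card (C \<union> Z) = card B1" "card (C \<union> (G - Z)) = card B1"
      using Z card_CZ card_CGZ by auto
    have aS1: "\<forall>e\<in>(C \<union> Z) - {q0}. a e \<in> V.span (v ` B1)" "\<forall>e\<in>(C \<union> (G - Z)) - {q0}. a e \<in> V.span (v ` B1)"
      using aS Z by auto
    have q0G: "q0 \<in> G" using q0 by blast
    show ?thesis
    proof (cases "q0 \<in> Z")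
      case True
      have "q0 \<notin> C \<union> (G - Z)" using True CG q0G by blast
      then have eq: "lic (a(q0:=z)) (C \<union> (G - Z)) = lic a (C \<union> (G - Z))" for z
        by (intro lic_cong) auto
      have "ind (lic (a(q0:=x+y)) (C \<union> Z)) = ind (lic (a(q0:=x)) (C \<union> Z)) + ind (lic (a(q0:=y)) (C \<union> Z))"
        using hyperplane[OF fB1 lB1 fin1(1) _ c1(1) aS1(1) x y] True by blast
      then show ?thesis using eq by (simp add: distrib_right)
    next
      case False
      then have q0in: "q0 \<in> C \<union> (G - Z)" using q0G by blast
      have "q0 \<notin> C \<union> Z" using False CG q0G by blast
      then have eq: "lic (a(q0:=z)) (C \<union> Z) = lic a (C \<union> Z)" for z
        by (intro lic_cong) auto
      have "ind (lic (a(q0:=x+y)) (C \<union> (G - Z))) = ind (lic (a(q0:=x)) (C \<union> (G - Z))) + ind (lic (a(q0:=y)) (C \<union> (G - Z)))"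
        using hyperplane[OF fB1 lB1 fin1(2) q0in c1(2) aS1(2) x y] by blast
      then show ?thesis using eq by (simp add: distrib_left)
    qed
  qed
  show ?thesis unfolding ZS_bit using trm by (simp add: sum.distrib[symmetric])
qed

lemma ZS_zero:
  assumes q0: "q0 \<in> Q"
  shows "ZS (a(q0:=0)) C G p0 k = {}"
proof -
  have nl: "\<not> lic (a(q0:=0)) S" if "q0 \<in> S" "finite S" for S
  proof
    assume "lic (a(q0:=0)) S"
    then have "V.independent ((a(q0:=0)) ` S)" using that by (simp add: lic_iff_indep)
    moreover have "0 \<in> (a(q0:=0)) ` S" using that by force
    ultimately show False using V.dependent_zero[of "(a(q0:=0)) ` S"] by simp
  qed
  have "Z \<notin> ZS (a(q0:=0)) C G p0 k" for Z
  proof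
    assume Z: "Z \<in> ZS (a(q0:=0)) C G p0 k"
    then have Zs: "Z \<subseteq> G" "lic (a(q0:=0)) (C \<union> Z)" "lic (a(q0:=0)) (C \<union> (G - Z))"
      unfolding ZS_def by auto
    have f: "finite (C \<union> Z)" "finite (C \<union> (G - Z))" using Zs(1) finC finG finite_subset by auto
    show False
    proof (cases "q0 \<in> Z")
      case True then show False using nl[OF _ f(1)] Zs(2) by simp
    next
      case False then have "q0 \<in> C \<union> (G - Z)" using q0 by simp
      then show False using nl[OF _ f(2)] Zs(3) by simp
    qed
  qed
  then show ?thesis by blast
qed

lemma base_case:
  assumes aB: "\<forall>e\<in>B1. a e = v e" and aQ: "\<forall>q\<in>Q. a q \<in> v ` B1"
  shows "even (card (ZS a C G p0 k))"
proof -
  define l where "l e = (if e \<in> B1 then e else (SOME b. b \<in> B1 \<and> a e = v b))" for e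
  have l: "l e \<in> B1 \<and> a e = v (l e)" if "e \<in> C \<union> G" for e
  proof (cases "e \<in> B1")
    case True then show ?thesis using aB l_def by simp
  next
    case False
    then have "e \<in> Q" using that CB by blast
    then have "\<exists>b. b \<in> B1 \<and> a e = v b" using aQ by blast
    then show ?thesis using False l_def by (metis (mono_tags, lifting) someI_ex)
  qed
  have lB: "l e = e" if "e \<in> B1" for e using that l_def by simp
  have lab: "lic a S \<longleftrightarrow> inj_on l S" if S: "S \<subseteq> C \<union> G" for S
  proof -
    have fS: "finite S" using S finC finG finite_subset by blast
    have "lic a S = lic (\<lambda>e. v (l e)) S" using l S by (intro lic_cong) blast
    also have "\<dots> \<longleftrightarrow> inj_on l S"
    proof
      assume L: "lic (\<lambda>e. v (l e)) S"
      then have "inj_on (\<lambda>e. v (l e)) S" using fS by (simp add: lic_iff_indep)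
      then show "inj_on l S" by (auto simp: inj_on_def)
    next
      assume I: "inj_on l S"
      have "l ` S \<subseteq> B1" using l S by blast
      then have "lic v (l ` S)" using lic_mono[OF lB1 _ fB1] by blast
      then show "lic (\<lambda>e. v (l e)) S" using lic_reindex[OF I fS, of v] by simp
    qed
    finally show ?thesis .
  qed
  define L where "L = {x \<in> G. l x = p1}"
  define \<sigma> where "\<sigma> Z = (Z - L) \<union> (L - Z)" for Z
  have p1B: "p1 \<in> B1" "p1 \<notin> C" using p1 by auto
  have hit: "\<exists>z\<in>S. l z = p1" if S: "S \<subseteq> C \<union> G" "inj_on l S" "card S = card B1" for S
  proof -
    have fS: "finite S" using S finC finG finite_subset by blast
    have "l ` S \<subseteq> B1" using l S by blast
    moreover have "card (l ` S) = card B1" using card_image[OF S(2)] S(3) by simp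
    ultimately have "l ` S = B1" using card_subset_eq[OF fB1, of "l ` S"] by simp
    then have "p1 \<in> l ` S" using p1B by simp
    then show ?thesis by (auto simp: image_iff)
  qed
  have step: "\<sigma> Z \<in> ZS a C G p0 k \<and> \<sigma> Z \<noteq> Z" if Z: "Z \<in> ZS a C G p0 k" for Z
  proof -
    have Zp: "Z \<subseteq> G" "p0 \<in> Z" "card Z = k" "lic a (C \<union> Z)" "lic a (C \<union> (G - Z))"
      using Z unfolding ZS_def by auto
    have s1: "C \<union> Z \<subseteq> C \<union> G" "C \<union> (G - Z) \<subseteq> C \<union> G" using Zp by auto
    have i1: "inj_on l (C \<union> Z)" using lab[OF s1(1)] Zp(4) by simp
    have i2: "inj_on l (C \<union> (G - Z))" using lab[OF s1(2)] Zp(5) by simp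
    obtain z1 where z1: "z1 \<in> C \<union> Z" "l z1 = p1" using hit[OF s1(1) i1 card_CZ[OF Zp(1,3)]] by blast
    obtain z2 where z2: "z2 \<in> C \<union> (G - Z)" "l z2 = p1" using hit[OF s1(2) i2 card_CGZ[OF Zp(1,3)]] by blast
    have z1C: "z1 \<notin> C"
    proof
      assume "z1 \<in> C" then have "l z1 = z1" using lB CB by blast
      then show False using z1 p1B \<open>z1 \<in> C\<close> by simp
    qed
    have z2C: "z2 \<notin> C"
    proof
      assume "z2 \<in> C" then have "l z2 = z2" using lB CB by blast
      then show False using z2 p1B \<open>z2 \<in> C\<close> by simp
    qed
    have z1Z: "z1 \<in> Z" using z1 z1C by blast
    have z2Z: "z2 \<in> G" "z2 \<notin> Z" using z2 z2C by auto
    have LZ: "L \<inter> Z = {z1}"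
    proof
      show "L \<inter> Z \<subseteq> {z1}"
      proof
        fix z assume "z \<in> L \<inter> Z"
        then have "z \<in> C \<union> Z" "l z = l z1" using L_def z1 by auto
        then show "z \<in> {z1}" using inj_onD[OF i1, of z z1] z1 by simp
      qed
      show "{z1} \<subseteq> L \<inter> Z" using z1Z z1 Zp L_def by auto
    qed
    have LmZ: "L - Z = {z2}"
    proof
      show "L - Z \<subseteq> {z2}"
      proof
        fix z assume "z \<in> L - Z"
        then have "z \<in> C \<union> (G - Z)" "l z = l z2" using L_def z2 by auto
        then show "z \<in> {z2}" using inj_onD[OF i2, of z z2] z2 by simp
      qed
      show "{z2} \<subseteq> L - Z" using z2Z z2 L_def by auto
    qed
    have sZ: "\<sigma> Z = insert z2 (Z - {z1})" unfolding \<sigma>_def using LZ LmZ by blast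
    have p0z1: "p0 \<noteq> z1"
    proof
      assume "p0 = z1" then have "l p0 = p1" using z1 by simp
      moreover have "l p0 = p0" using lB p0 by blast
      ultimately show False using p01 by simp
    qed
    have e1: "C \<union> \<sigma> Z = insert z2 ((C \<union> Z) - {z1})" using sZ z1C by auto
    have e2: "C \<union> (G - \<sigma> Z) = insert z1 ((C \<union> (G - Z)) - {z2})" using sZ z2C z1Z Zp z2Z by auto
    have "inj_on l (insert z2 ((C \<union> Z) - {z1}))"
    proof -
      have "inj_on l ((C \<union> Z) - {z1})" using i1 by (rule inj_on_subset) auto
      moreover have "l z2 \<notin> l ` ((C \<union> Z) - {z1})"
      proof
        assume "l z2 \<in> l ` ((C \<union> Z) - {z1})"
        then obtain w where w: "w \<in> (C \<union> Z) - {z1}" "l z2 = l w" by (auto simp: image_iff)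
        then have "l w = l z1" using z1 z2 by simp
        then show False using inj_onD[OF i1, of w z1] z1 w(1) by simp
      qed
      ultimately show ?thesis unfolding inj_on_insert by blast
    qed
    moreover have sub1: "C \<union> \<sigma> Z \<subseteq> C \<union> G" using sZ Zp z2Z by auto
    ultimately have L1: "lic a (C \<union> \<sigma> Z)" using lab[OF sub1] e1 by simp
    have "inj_on l (insert z1 ((C \<union> (G - Z)) - {z2}))"
    proof -
      have "inj_on l ((C \<union> (G - Z)) - {z2})" using i2 by (rule inj_on_subset) auto
      moreover have "l z1 \<notin> l ` ((C \<union> (G - Z)) - {z2})"
      proof
        assume "l z1 \<in> l ` ((C \<union> (G - Z)) - {z2})"
        then obtain w where w: "w \<in> (C \<union> (G - Z)) - {z2}" "l z1 = l w" by (auto simp: image_iff)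
        then have "l w = l z2" using z1 z2 by simp
        then show False using inj_onD[OF i2, of w z2] z2 w(1) by simp
      qed
      ultimately show ?thesis unfolding inj_on_insert by blast
    qed
    moreover have sub2: "C \<union> (G - \<sigma> Z) \<subseteq> C \<union> G" by auto
    ultimately have L2: "lic a (C \<union> (G - \<sigma> Z))" using lab[OF sub2] e2 by simp
    have fZ: "finite Z" using Zp finG finite_subset by blast
    have "card Z > 0" using z1Z fZ card_gt_0_iff by blast
    then have "card (\<sigma> Z) = card Z" using sZ z1Z z2Z fZ by (simp add: card.insert_remove card_Diff_singleton)
    moreover have "\<sigma> Z \<subseteq> G" "p0 \<in> \<sigma> Z" using sZ Zp z2Z p0z1 by auto
    ultimately have "\<sigma> Z \<in> ZS a C G p0 k" using L1 L2 Zp unfolding ZS_def by auto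
    moreover have "\<sigma> Z \<noteq> Z" using sZ z1Z z2Z by auto
    ultimately show ?thesis by blast
  qed
  have invol: "\<sigma> (\<sigma> Z) = Z" for Z unfolding \<sigma>_def by blast
  show ?thesis using even_invol[OF ZS_fin[of a], where f=\<sigma>] step invol by blast
qed

lemma main_parity:
  assumes aB: "\<forall>e\<in>B1. a e = v e" and aQ: "\<forall>q\<in>Q. a q \<in> V.span (v ` B1)"
  shows "even (card (ZS a C G p0 k))"
proof -
  have "\<forall>a. (\<forall>e\<in>B1. a e = v e) \<and> (\<forall>q\<in>Q. a q \<in> V.span (v ` B1)) \<and> card {q\<in>Q. a q \<notin> v ` B1} \<le> n
        \<longrightarrow> even (card (ZS a C G p0 k))" for n
  proof (induction n)
    case 0
    show ?case
    proof (intro allI impI)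
      fix a assume h: "(\<forall>e\<in>B1. a e = v e) \<and> (\<forall>q\<in>Q. a q \<in> V.span (v ` B1)) \<and> card {q\<in>Q. a q \<notin> v ` B1} \<le> 0"
      have "finite {q\<in>Q. a q \<notin> v ` B1}" using fQ by simp
      then have "{q\<in>Q. a q \<notin> v ` B1} = {}" using h by simp
      then have "\<forall>q\<in>Q. a q \<in> v ` B1" by blast
      then show "even (card (ZS a C G p0 k))" using base_case h by blast
    qed
  next
    case (Suc n)
    show ?case
    proof (intro allI impI)
      fix a assume h: "(\<forall>e\<in>B1. a e = v e) \<and> (\<forall>q\<in>Q. a q \<in> V.span (v ` B1)) \<and> card {q\<in>Q. a q \<notin> v ` B1} \<le> Suc n"
      show "even (card (ZS a C G p0 k))"
      proof (cases "card {q\<in>Q. a q \<notin> v ` B1} \<le> n")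
        case True then show ?thesis using Suc.IH h by blast
      next
        case False
        then have "{q\<in>Q. a q \<notin> v ` B1} \<noteq> {}" by (metis card.empty le0)
        then obtain q0 where q0: "q0 \<in> Q" "a q0 \<notin> v ` B1" by blast
        have q0B: "q0 \<notin> B1" using q0 QB by blast
        have aS: "\<forall>e\<in>(C \<union> G) - {q0}. a e \<in> V.span (v ` B1)"
        proof
          fix e assume e: "e \<in> (C \<union> G) - {q0}"
          show "a e \<in> V.span (v ` B1)"
          proof (cases "e \<in> B1")
            case True then show ?thesis using h V.span_base by (metis imageI)
          next
            case False then show ?thesis using h e CB by auto
          qed
        qed
        have inner: "\<forall>x\<in>V.span (v ` T). even (card (ZS (a(q0:=x)) C G p0 k))"
          if "finite T" "T \<subseteq> B1" for T
          using that
        proof (induction T rule: finite_induct)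
          case empty
          show ?case
          proof
            fix x assume "x \<in> V.span (v ` {})"
            then have "x = 0" by simp
            then show "even (card (ZS (a(q0:=x)) C G p0 k))" using ZS_zero[OF q0(1), of a] by simp
          qed
        next
          case (insert b T)
          show ?case
          proof
            fix x assume x: "x \<in> V.span (v ` insert b T)"
            then have "x \<in> V.span (insert (v b) (v ` T))" by simp
            then obtain kk where kk: "x - sc kk (v b) \<in> V.span (v ` T)" using V.span_breakdown_eq by blast
            show "even (card (ZS (a(q0:=x)) C G p0 k))"
            proof (cases "kk = 0")
              case True
              have "sc 0 (v b) = 0" by (simp add: sc_def fun_eq_iff)
              then have "x \<in> V.span (v ` T)" using kk True by simp
              then show ?thesis using insert by blast
            next
              case False
              then have "kk = 1" by simp
              then have "sc kk (v b) = v b" by (simp add: sc_def)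
              define y where "y = x + v b"
              have y: "y \<in> V.span (v ` T)" using kk \<open>sc kk (v b) = v b\<close> y_def by (simp add: fun_minus_bit)
              have xy: "x = v b + y" unfolding y_def by (simp add: fun_eq_iff bit_aba add.commute)
              have spT: "V.span (v ` T) \<subseteq> V.span (v ` B1)" using insert by (intro V.span_mono) auto
              have vb: "v b \<in> V.span (v ` B1)" using insert V.span_base by blast
              have "(of_nat (card (ZS (a(q0:=x)) C G p0 k)) :: bit) =
                 of_nat (card (ZS (a(q0:=v b)) C G p0 k)) + of_nat (card (ZS (a(q0:=y)) C G p0 k))"
                using ZS_add[OF q0(1) aS vb] y spT xy by blast
              moreover have "even (card (ZS (a(q0:=y)) C G p0 k))" using insert y by blast
              moreover have "even (card (ZS (a(q0:=v b)) C G p0 k))"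
              proof -
                have sub: "{q\<in>Q. (a(q0:=v b)) q \<notin> v ` B1} \<subseteq> {q\<in>Q. a q \<notin> v ` B1} - {q0}"
                  using insert by auto
                have "card {q\<in>Q. (a(q0:=v b)) q \<notin> v ` B1} \<le> card ({q\<in>Q. a q \<notin> v ` B1} - {q0})"
                  using card_mono[OF _ sub] fQ by simp
                also have "\<dots> = card {q\<in>Q. a q \<notin> v ` B1} - 1" using q0 fQ by simp
                also have "\<dots> \<le> n" using h by linarith
                finally have c: "card {q\<in>Q. (a(q0:=v b)) q \<notin> v ` B1} \<le> n" .
                have "\<forall>e\<in>B1. (a(q0:=v b)) e = v e" using h q0B by simp
                moreover have "\<forall>q\<in>Q. (a(q0:=v b)) q \<in> V.span (v ` B1)" using h vb by simp
                ultimately show ?thesis using Suc.IH c by blast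
              qed
              ultimately show ?thesis by (simp add: of_nat_bit_0[symmetric])
            qed
          qed
        qed
        have "even (card (ZS (a(q0:=a q0)) C G p0 k))" using inner[OF fB1 order_refl] h q0 by blast
        then show ?thesis by simp
      qed
    qed
  qed
  then show ?thesis using assms by blast
qed

end



lemma dir1:
  assumes M: "matroid_bases E \<B>" and bin: "binary_matroid E \<B>"
    and B1: "B1 \<in> \<B>" and B2: "B2 \<in> \<B>"
  shows "Delta \<B> B1 B2 \<noteq> 3"
proof -
  obtain m and v :: "'a \<Rightarrow> nat \<Rightarrow> bit" where rep: "\<forall>S. S \<subseteq> E \<longrightarrow> (indep \<B> S \<longleftrightarrow> lic v S)"
    using bin unfolding binary_matroid_def representable_over_def lin_indep_cols_lic by blast
  have bchar: "S \<in> \<B> \<longleftrightarrow> card S = card B1 \<and> lic v S" if S: "S \<subseteq> E" for S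
  proof
    assume "S \<in> \<B>"
    then have "indep \<B> S" unfolding indep_def by blast
    then show "card S = card B1 \<and> lic v S" using rep S card_eq[OF M \<open>S \<in> \<B>\<close> B1] by blast
  next
    assume "card S = card B1 \<and> lic v S"
    then show "S \<in> \<B>" using rep S indep_base[OF M _ B1] by blast
  qed
  have fB1: "finite B1" using base_fin[OF M B1] .
  have fB2: "finite B2" using base_fin[OF M B2] .
  have lB1: "lic v B1" using bchar[OF base_sub[OF M B1]] B1 by blast
  define C where "C = B1 \<inter> B2"
  define Q where "Q = B2 - B1"
  define k where "k = card (B1 - C)"
  have cQ: "card Q = k"
  proof -
    have "card (B1 - C) = card B1 - card C" using fB1 C_def by (simp add: card_Diff_subset finite_subset)
    moreover have "card Q = card B2 - card C"
    proof -
      have "Q = B2 - C" using Q_def C_def by blast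
      moreover have "C \<subseteq> B2" "finite C" using C_def fB1 by auto
      ultimately show ?thesis by (simp add: card_Diff_subset)
    qed
    ultimately show ?thesis using card_eq[OF M B1 B2] k_def by simp
  qed
  show ?thesis
  proof (cases "B1 - C = {}")
    case True
    then have "B1 \<subseteq> B2" using C_def by blast
    then have eq: "B1 = B2" using card_eq[OF M B1 B2] fB2 by (simp add: card_subset_eq)
    have "{{D1, D2} | D1 D2. D1 \<in> \<B> \<and> D2 \<in> \<B> \<and> D1 \<inter> D2 = B1 \<inter> B2 \<and> D1 \<union> D2 = B1 \<union> B2} = {{B1}}"
    proof
      show "{{D1, D2} | D1 D2. D1 \<in> \<B> \<and> D2 \<in> \<B> \<and> D1 \<inter> D2 = B1 \<inter> B2 \<and> D1 \<union> D2 = B1 \<union> B2} \<subseteq> {{B1}}"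
      proof
        fix P assume "P \<in> {{D1, D2} | D1 D2. D1 \<in> \<B> \<and> D2 \<in> \<B> \<and> D1 \<inter> D2 = B1 \<inter> B2 \<and> D1 \<union> D2 = B1 \<union> B2}"
        then obtain D1 D2 where D: "P = {D1, D2}" "D1 \<inter> D2 = B1" "D1 \<union> D2 = B1" using eq by auto
        then have "D1 = B1" "D2 = B1" by blast+
        then show "P \<in> {{B1}}" using D by simp
      qed
      show "{{B1}} \<subseteq> {{D1, D2} | D1 D2. D1 \<in> \<B> \<and> D2 \<in> \<B> \<and> D1 \<inter> D2 = B1 \<inter> B2 \<and> D1 \<union> D2 = B1 \<union> B2}"
        using B1 eq by auto
    qed
    then have "Delta \<B> B1 B2 = 1" using Delta_alt[OF M B1 B2] by simp
    then show ?thesis by simp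
  next
    case False
    then obtain p0 where p0: "p0 \<in> B1 - C" by blast
    have p0': "p0 \<in> B1 - B2" using p0 C_def by blast
    define G where "G = (B1 - C) \<union> Q"
    have Geq: "(B1 \<union> B2) - (B1 \<inter> B2) = G" using C_def Q_def G_def by blast
    let ?ZB = "{Z. Z \<subseteq> G \<and> p0 \<in> Z \<and> C \<union> Z \<in> \<B> \<and> C \<union> (G - Z) \<in> \<B>}"
    have D: "Delta \<B> B1 B2 = card ?ZB" using Delta_Z[OF M B1 B2 p0'] Geq C_def by simp
    have fC: "finite C" using fB1 C_def by simp
    have fG: "finite G" using fB1 fB2 G_def Q_def by simp
    have CG: "C \<inter> G = {}" using C_def G_def Q_def by blast
    have GE: "C \<union> G \<subseteq> E" using base_sub[OF M B1] base_sub[OF M B2] C_def G_def Q_def by blast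
    have cB1: "card B1 = card C + k"
    proof -
      have "C \<subseteq> B1" using C_def by blast
      then have "card (B1 - C) = card B1 - card C" "card C \<le> card B1"
        using card_Diff_subset[OF fC] card_mono[OF fB1] by auto
      then show ?thesis using k_def by simp
    qed
    have cZ: "Z \<subseteq> G \<Longrightarrow> card (C \<union> Z) = card C + card Z" for Z
      using CG fC fG finite_subset by (subst card_Un_disjoint) auto
    have cG: "card G = 2 * k"
    proof -
      have "(B1 - C) \<inter> Q = {}" using Q_def by blast
      then show ?thesis using fB1 fB2 Q_def G_def k_def cQ by (simp add: card_Un_disjoint)
    qed
    have ZB_card: "Z \<in> ?ZB \<Longrightarrow> card Z = k" for Z
    proof -
      assume Z: "Z \<in> ?ZB"
      then have "C \<union> Z \<subseteq> E" using GE by blast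
      then have "card (C \<union> Z) = card B1" using Z bchar by blast
      then show "card Z = k" using cZ cB1 Z by simp
    qed
    show ?thesis
    proof (cases "k \<le> 1")
      case True
      have "?ZB \<subseteq> {{p0}}"
      proof
        fix Z assume Z: "Z \<in> ?ZB"
        then have "card Z = k" using ZB_card by blast
        moreover have "p0 \<in> Z" "finite Z" using Z fG finite_subset by auto
        moreover have "card Z \<noteq> 0" using \<open>p0 \<in> Z\<close> \<open>finite Z\<close> by auto
        ultimately have "card Z = 1" using True by simp
        then obtain z where "Z = {z}" using card_1_singletonE by blast
        then have "Z = {p0}" using \<open>p0 \<in> Z\<close> by simp
        then show "Z \<in> {{p0}}" by simp
      qed
      then have "card ?ZB \<le> 1" using card_mono[of "{{p0}}" ?ZB] by simp
      then show ?thesis using D by simp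
    next
      case False
      then have "card ((B1 - C) - {p0}) \<ge> 1" using p0 k_def fB1 by simp
      then have "(B1 - C) - {p0} \<noteq> {}" by (metis card.empty not_one_le_zero)
      then obtain p1 where p1: "p1 \<in> B1 - C" "p1 \<noteq> p0" by blast
      have fQ: "finite Q" using fB2 Q_def by simp
      have QB: "Q \<inter> B1 = {}" using Q_def by blast
      have CB: "C \<subseteq> B1" using C_def by blast
      have aQ: "\<forall>q\<in>Q. v q \<in> V.span (v ` B1)"
      proof
        fix q assume q: "q \<in> Q"
        have qB: "q \<notin> B1" using q Q_def by blast
        have "insert q B1 \<subseteq> E" using q Q_def base_sub[OF M B1] base_sub[OF M B2] by blast
        moreover have "\<not> indep \<B> (insert q B1)"
        proof
          assume "indep \<B> (insert q B1)"
          then have "card (insert q B1) \<le> card B1" using indep_card[OF M _ B1] by blast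
          then show False using qB fB1 by simp
        qed
        ultimately have "\<not> lic v (insert q B1)" using rep by blast
        then show "v q \<in> V.span (v ` B1)" using lic_insert[OF fB1 qB] lB1 by blast
      qed
      have "even (card (ZS v C ((B1 - C) \<union> Q) p0 k))"
        using main_parity[OF fB1 lB1 CB p0 p1(1) p1(2)[symmetric] fQ QB k_def[symmetric] cQ, of v] aQ by blast
      moreover have "ZS v C ((B1 - C) \<union> Q) p0 k = ?ZB"
      proof
        show "ZS v C ((B1 - C) \<union> Q) p0 k \<subseteq> ?ZB"
        proof
          fix Z assume "Z \<in> ZS v C ((B1 - C) \<union> Q) p0 k"
          then have Z: "Z \<subseteq> G" "p0 \<in> Z" "card Z = k" "lic v (C \<union> Z)" "lic v (C \<union> (G - Z))"
            unfolding ZS_def G_def by auto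
          have c2: "card (G - Z) = k" using Z cG fG by (simp add: card_Diff_subset finite_subset)
          have s1: "C \<union> Z \<subseteq> E" "C \<union> (G - Z) \<subseteq> E" using GE Z(1) by auto
          have "card (C \<union> Z) = card B1" using cZ[OF Z(1)] Z(3) cB1 by simp
          then have b1: "C \<union> Z \<in> \<B>" using bchar[OF s1(1)] Z(4) by simp
          have "card (C \<union> (G - Z)) = card B1" using cZ[of "G - Z"] c2 cB1 by simp
          then have b2: "C \<union> (G - Z) \<in> \<B>" using bchar[OF s1(2)] Z(5) by simp
          show "Z \<in> ?ZB" using Z(1,2) b1 b2 by simp
        qed
        show "?ZB \<subseteq> ZS v C ((B1 - C) \<union> Q) p0 k"
        proof
          fix Z assume Z: "Z \<in> ?ZB"
          then have ck: "card Z = k" using ZB_card by blast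
          have Zs: "Z \<subseteq> G" "p0 \<in> Z" "C \<union> Z \<in> \<B>" "C \<union> (G - Z) \<in> \<B>" using Z by auto
          have s1: "C \<union> Z \<subseteq> E" "C \<union> (G - Z) \<subseteq> E" using Zs(1) GE by auto
          have "lic v (C \<union> Z)" using bchar[OF s1(1)] Zs(3) by simp
          moreover have "lic v (C \<union> (G - Z))" using bchar[OF s1(2)] Zs(4) by simp
          ultimately show "Z \<in> ZS v C ((B1 - C) \<union> Q) p0 k" using Zs ck unfolding ZS_def G_def by simp
        qed
      qed
      ultimately have "even (Delta \<B> B1 B2)" using D by simp
      then show ?thesis by presburger
    qed
  qed
qed




definition fund :: "'a set set \<Rightarrow> 'a set \<Rightarrow> 'a \<Rightarrow> 'a \<Rightarrow> bit" where
  "fund \<B> B e = (if e \<in> B then unitv e else (\<lambda>b. if b \<in> B \<and> insert e (B - {b}) \<in> \<B> then 1 else 0))"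

definition fundL :: "('a \<Rightarrow> 'a \<Rightarrow> bit) \<Rightarrow> 'a set \<Rightarrow> 'a \<Rightarrow> 'a \<Rightarrow> bit" where
  "fundL w B e = (if e \<in> B then unitv e else (\<lambda>b. if b \<in> B \<and> lic w (insert e (B - {b})) then 1 else 0))"

lemma fund_supp: "i \<notin> B \<Longrightarrow> fund \<B> B e i = 0"
  by (auto simp: fund_def unitv_def)

lemma fundL_supp: "i \<notin> B \<Longrightarrow> fundL w B e i = 0"
  by (auto simp: fundL_def unitv_def)

lemma fund_unit: "b \<in> B \<Longrightarrow> fund \<B> B b = unitv b"
  by (simp add: fund_def)

lemma fundL_unit: "b \<in> B \<Longrightarrow> fundL w B b = unitv b"
  by (simp add: fundL_def)

lemma sum_unit_coef: "finite B2 \<Longrightarrow> e \<in> B2 \<Longrightarrow> (\<Sum>b\<in>B2. sc (unitv e b) (w b)) = w e"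
proof -
  assume f: "finite B2" and e: "e \<in> B2"
  have "(\<Sum>b\<in>B2. sc (unitv e b) (w b)) = (\<Sum>b\<in>B2. if b = e then w e else 0)"
    by (intro sum.cong) (auto simp: unitv_def sc_def fun_eq_iff)
  also have "\<dots> = w e" using f e by simp
  finally show ?thesis .
qed

lemma coord:
  assumes fB: "finite B" and wu: "\<forall>b\<in>B. w b = unitv b" and ws: "\<forall>e i. i \<notin> B \<longrightarrow> w e i = 0"
    and fB2: "finite B2" and lB2: "lic w B2" and cB2: "card B2 = card B"
  shows "w e = (\<Sum>b\<in>B2. sc (fundL w B2 e b) (w b))"
proof (cases "e \<in> B2")
  case True
  then show ?thesis using sum_unit_coef[OF fB2 True, of w] by (simp add: fundL_def)
next
  case False
  have spB: "w x \<in> V.span (w ` B)" for x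
  proof -
    have "w ` B = unitv ` B" using wu by auto
    then show ?thesis using span_units[OF fB] ws by auto
  qed
  have "w e \<in> V.span (w ` B2)"
  proof (rule ccontr)
    assume "w e \<notin> V.span (w ` B2)"
    then have "lic w (insert e B2)" using lic_insert[OF fB2 False] lB2 by blast
    then have "card (insert e B2) \<le> card B"
      using lic_bound[of "insert e B2" B w w] fB fB2 spB by auto
    then show False using False fB2 cB2 by simp
  qed
  then obtain c where c: "w e = (\<Sum>b\<in>B2. sc (c b) (w b))" using span_fam[OF fB2] by blast
  have cf: "c b = fundL w B2 e b" if b: "b \<in> B2" for b
  proof -
    have fB2b: "finite (B2 - {b})" using fB2 by simp
    have lb: "lic w (B2 - {b})" using lic_mono[OF lB2 _ fB2] by blast
    have eq: "fundL w B2 e b = (if w e \<notin> V.span (w ` (B2 - {b})) then 1 else 0)"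
      using False b lic_insert[OF fB2b, of e w] lb by (simp add: fundL_def)
    have split: "(\<Sum>b'\<in>B2. sc (d b') (w b')) = sc (d b) (w b) + (\<Sum>b'\<in>B2 - {b}. sc (d b') (w b'))" for d
      using b fB2 by (simp add: sum.remove)
    show ?thesis
    proof (cases "c b = 0")
      case True
      have "sc (c b) (w b) = 0" using True by (simp add: sc_def fun_eq_iff)
      then have "w e = (\<Sum>b'\<in>B2 - {b}. sc (c b') (w b'))" using c split[of c] by simp
      then have "w e \<in> V.span (w ` (B2 - {b}))" using span_fam[OF fB2b] by blast
      then show ?thesis using eq True by simp
    next
      case c1: False
      have "w e \<notin> V.span (w ` (B2 - {b}))"
      proof
        assume "w e \<in> V.span (w ` (B2 - {b}))"
        then obtain d where d: "w e = (\<Sum>b'\<in>B2 - {b}. sc (d b') (w b'))" using span_fam[OF fB2b] by blast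
        let ?d = "d(b := 0)"
        have "(\<Sum>b'\<in>B2 - {b}. sc (?d b') (w b')) = (\<Sum>b'\<in>B2 - {b}. sc (d b') (w b'))"
          by (intro sum.cong) auto
        moreover have "sc (?d b) (w b) = 0" by (simp add: sc_def fun_eq_iff)
        ultimately have "w e = (\<Sum>b'\<in>B2. sc (?d b') (w b'))" using d split[of ?d] by simp
        then have "c b = ?d b" using coeff_unique[OF lB2 fB2, of c ?d] c b by simp
        then show False using c1 by simp
      qed
      then show ?thesis using eq c1 by simp
    qed
  qed
  have "(\<Sum>b\<in>B2. sc (fundL w B2 e b) (w b)) = (\<Sum>b\<in>B2. sc (c b) (w b))"
    using cf by (intro sum.cong) auto
  then show ?thesis using c by simp
qed

definition pr :: "'a set \<Rightarrow> 'a \<Rightarrow> 'a \<Rightarrow> 'a set" where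
  "pr C a b = insert a (insert b C)"

lemma exB:
  assumes M: "matroid_bases E \<B>" and h1: "pr C a b \<in> \<B>" and h2: "pr C c d \<in> \<B>"
    and "a \<notin> C" "a \<noteq> b" "a \<noteq> c" "a \<noteq> d"
  shows "pr C c b \<in> \<B> \<or> pr C d b \<in> \<B>"
proof -
  have "a \<in> pr C a b - pr C c d" using assms by (simp add: pr_def)
  then obtain y where y: "y \<in> pr C c d - pr C a b" "insert y (pr C a b - {a}) \<in> \<B>"
    using exch[OF M h1 h2] by blast
  have "pr C a b - {a} = insert b C" using assms by (auto simp: pr_def)
  then have "pr C y b \<in> \<B>" using y by (simp add: pr_def)
  moreover have "y = c \<or> y = d" using y by (auto simp: pr_def)
  ultimately show ?thesis by blast
qed

lemma k2_comb:
  assumes M: "matroid_bases E \<B>" and DH: "\<forall>B1\<in>\<B>. \<forall>B2\<in>\<B>. Delta \<B> B1 B2 \<noteq> 3"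
    and d: "x1 \<noteq> x2" "x1 \<noteq> y1" "x1 \<noteq> y2" "x2 \<noteq> y1" "x2 \<noteq> y2" "y1 \<noteq> y2"
    and nC: "x1 \<notin> C" "x2 \<notin> C" "y1 \<notin> C" "y2 \<notin> C"
    and B: "pr C x1 x2 \<in> \<B>" and m11: "pr C x2 y1 \<in> \<B>"
  shows "pr C y1 y2 \<in> \<B> \<longleftrightarrow>
     ind (pr C x1 y2 \<in> \<B>) + ind (pr C x2 y2 \<in> \<B>) * ind (pr C x1 y1 \<in> \<B>) = 1"
proof -
  have sym: "pr C a b = pr C b a" for a b by (auto simp: pr_def)
  have fC: "finite C" using base_fin[OF M B] by (simp add: pr_def)
  show ?thesis
  proof (cases "pr C x1 y2 \<in> \<B>")
    case m22: True
    show ?thesis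
    proof (cases "pr C x2 y2 \<in> \<B> \<and> pr C x1 y1 \<in> \<B>")
      case True
      then have m12: "pr C x2 y2 \<in> \<B>" and m21: "pr C x1 y1 \<in> \<B>" by auto
      have "pr C y1 y2 \<notin> \<B>"
      proof
        assume S: "pr C y1 y2 \<in> \<B>"
        have p0: "x1 \<in> pr C x1 x2 - pr C y1 y2" using d nC by (auto simp: pr_def)
        have I: "pr C x1 x2 \<inter> pr C y1 y2 = C" using d nC by (auto simp: pr_def)
        have U: "(pr C x1 x2 \<union> pr C y1 y2) - (pr C x1 x2 \<inter> pr C y1 y2) = {x1, x2, y1, y2}"
          using d nC by (auto simp: pr_def)
        let ?G = "{x1, x2, y1, y2}"
        have cB: "card (pr C x1 x2) = card C + 2" using fC nC d by (simp add: pr_def)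
        have ZS: "{Z. Z \<subseteq> ?G \<and> x1 \<in> Z \<and> C \<union> Z \<in> \<B> \<and> C \<union> (?G - Z) \<in> \<B>} = {{x1,x2},{x1,y1},{x1,y2}}"
        proof
          show "{Z. Z \<subseteq> ?G \<and> x1 \<in> Z \<and> C \<union> Z \<in> \<B> \<and> C \<union> (?G - Z) \<in> \<B>} \<subseteq> {{x1,x2},{x1,y1},{x1,y2}}"
          proof
            fix Z assume "Z \<in> {Z. Z \<subseteq> ?G \<and> x1 \<in> Z \<and> C \<union> Z \<in> \<B> \<and> C \<union> (?G - Z) \<in> \<B>}"
            then have Z: "Z \<subseteq> ?G" "x1 \<in> Z" "C \<union> Z \<in> \<B>" by auto
            have fZ: "finite Z" using Z(1) finite_subset by auto
            have "card (C \<union> Z) = card (pr C x1 x2)" using card_eq[OF M Z(3) B] .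
            moreover have "C \<inter> Z = {}" using Z(1) nC by auto
            ultimately have "card Z = 2" using cB fC fZ by (simp add: card_Un_disjoint)
            then have "card (Z - {x1}) = 1" using Z(2) fZ by simp
            then obtain t where t: "Z - {x1} = {t}" using card_1_singletonE by blast
            then have "Z = {x1, t}" "t \<in> ?G" "t \<noteq> x1" using Z by auto
            then show "Z \<in> {{x1,x2},{x1,y1},{x1,y2}}" by auto
          qed
          show "{{x1,x2},{x1,y1},{x1,y2}} \<subseteq> {Z. Z \<subseteq> ?G \<and> x1 \<in> Z \<and> C \<union> Z \<in> \<B> \<and> C \<union> (?G - Z) \<in> \<B>}"
          proof -
            have "C \<union> {x1,x2} = pr C x1 x2" "C \<union> (?G - {x1,x2}) = pr C y1 y2"
              "C \<union> {x1,y1} = pr C x1 y1" "C \<union> (?G - {x1,y1}) = pr C x2 y2"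
              "C \<union> {x1,y2} = pr C x1 y2" "C \<union> (?G - {x1,y2}) = pr C x2 y1"
              using d by (auto simp: pr_def)
            then show ?thesis using B S m21 m12 m22 m11 by auto
          qed
        qed
        have "card {{x1,x2},{x1,y1},{x1,y2}} = 3" using d by (simp add: doubleton_eq_iff)
        then have "Delta \<B> (pr C x1 x2) (pr C y1 y2) = 3"
          using Delta_Z[OF M B S p0] I U ZS by simp
        then show False using DH B S by blast
      qed
      then show ?thesis using True m22 by (simp add: ind_def)
    next
      case False
      have "pr C y1 y2 \<in> \<B>"
      proof (cases "pr C x2 y2 \<in> \<B>")
        case m12: False
        have "pr C x2 y2 \<in> \<B> \<or> pr C y1 y2 \<in> \<B>"
          using exB[OF M m22 m11, of] d nC by (simp add: sym)
        then show ?thesis using m12 by blast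
      next
        case True
        then have m21: "pr C x1 y1 \<notin> \<B>" using False by blast
        have "pr C x1 y1 \<in> \<B> \<or> pr C y2 y1 \<in> \<B>"
          using exB[OF M m11 m22] d nC by (simp add: sym)
        then show ?thesis using m21 sym by metis
      qed
      then show ?thesis using False m22 by (auto simp: ind_def)
    qed
  next
    case m22: False
    show ?thesis
    proof (cases "pr C x2 y2 \<in> \<B> \<and> pr C x1 y1 \<in> \<B>")
      case True
      then have m12: "pr C x2 y2 \<in> \<B>" and m21: "pr C x1 y1 \<in> \<B>" by auto
      have "pr C x1 y2 \<in> \<B> \<or> pr C y1 y2 \<in> \<B>"
        using exB[OF M m12 m21] d nC by (simp add: sym)
      then have "pr C y1 y2 \<in> \<B>" using m22 by blast
      then show ?thesis using True m22 by (simp add: ind_def)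
    next
      case False
      have "pr C y1 y2 \<notin> \<B>"
      proof
        assume S: "pr C y1 y2 \<in> \<B>"
        have "pr C x1 y2 \<in> \<B> \<or> pr C x2 y2 \<in> \<B>"
          using exB[OF M S B] d nC by (simp add: sym)
        then have m12: "pr C x2 y2 \<in> \<B>" using m22 by blast
        have "pr C y1 x1 \<in> \<B> \<or> pr C y2 x1 \<in> \<B>"
          using exB[OF M B[unfolded sym[of x1 x2]] S] d nC by (simp add: sym)
        then have m21: "pr C x1 y1 \<in> \<B>" using m22 sym by metis
        show False using False m12 m21 by blast
      qed
      then show ?thesis using False m22 by (auto simp: ind_def)
    qed
  qed
qed




lemma w_entry: "y \<notin> B \<Longrightarrow> x \<in> B \<Longrightarrow> fund \<B> B y x = ind (insert y (B - {x}) \<in> \<B>)"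
  by (simp add: fund_def ind_def)

lemma MC:
  assumes M: "matroid_bases E \<B>" and DH: "\<forall>B1\<in>\<B>. \<forall>B2\<in>\<B>. Delta \<B> B1 B2 \<noteq> 3"
  shows "\<forall>B S. B \<in> \<B> \<longrightarrow> S \<subseteq> E \<longrightarrow> card S = card B \<longrightarrow> card (S - B) = k \<longrightarrow>
           (S \<in> \<B> \<longleftrightarrow> lic (fund \<B> B) S)"
proof (induction k rule: less_induct)
  case (less k)
  show ?case
  proof (intro allI impI)
    fix B S assume B: "B \<in> \<B>" and SE: "S \<subseteq> E" and cS: "card S = card B" and kS: "card (S - B) = k"
    define w where "w = fund \<B> B"
    have fB: "finite B" using base_fin[OF M B] .
    have fS: "finite S" using SE finE[OF M] finite_subset by blast
    have wu: "\<forall>b\<in>B. w b = unitv b" unfolding w_def by (simp add: fund_unit)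
    have ws: "\<forall>e i. i \<notin> B \<longrightarrow> w e i = 0" unfolding w_def by (simp add: fund_supp)
    have kB: "card (B - S) = k"
    proof -
      have "card (S - B) = card S - card (S \<inter> B)" using fS by (simp add: card_Diff_subset_Int)
      moreover have "card (B - S) = card B - card (B \<inter> S)" using fB by (simp add: card_Diff_subset_Int)
      ultimately show ?thesis using cS kS by (simp add: Int_commute)
    qed
    show "S \<in> \<B> \<longleftrightarrow> lic (fund \<B> B) S"
    proof (cases "k = 0")
      case True
      then have "S - B = {}" using kS fS by simp
      then have "S \<subseteq> B" by blast
      then have "S = B" using card_subset_eq[OF fB] cS by blast
      then show ?thesis using B lic_units[OF wu fB] w_def by simp
    next
      case k0: False
      show ?thesis
      proof (cases "k = 1")
        case True
        obtain y where y: "S - B = {y}" using kS True card_1_singletonE by blast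
        obtain x where x: "B - S = {x}" using kB True card_1_singletonE by blast
        have Seq: "S = insert y (B - {x})" using x y by blast
        have yB: "y \<notin> B" "x \<in> B" using x y by auto
        have "lic w S \<longleftrightarrow> w y x \<noteq> 0"
          using lic_k1[OF fB yB(2) yB(1) wu] ws Seq by simp
        also have "\<dots> \<longleftrightarrow> S \<in> \<B>" using w_entry[OF yB] Seq w_def by (simp add: ind_def)
        finally show ?thesis using w_def by simp
      next
        case k1: False
        then have k2: "k \<ge> 2" using k0 by simp
        show ?thesis
        proof (cases "S \<in> \<B> \<or> lic w S")
          case False then show ?thesis using w_def by simp
        next
          case True
          have "\<exists>x1\<in>B - S. \<exists>y1\<in>S - B. insert y1 (B - {x1}) \<in> \<B>"
          proof -
            have "B - S \<noteq> {}"
            proof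
              assume "B - S = {}" then have "card (B - S) = 0" by (simp only: card.empty)
              then show False using kB k0 by simp
            qed
            then obtain x1 where x1: "x1 \<in> B - S" by blast
            show ?thesis
            proof (cases "S \<in> \<B>")
              case True then show ?thesis using exch[OF M B True x1] x1 by blast
            next
              case False
              then have lS: "lic w S" using \<open>S \<in> \<B> \<or> lic w S\<close> by simp
              show ?thesis
              proof (rule ccontr)
                assume "\<not> ?thesis"
                then have no: "\<forall>y\<in>S - B. insert y (B - {x1}) \<notin> \<B>" using x1 by blast
                have "\<forall>e\<in>S. w e \<in> V.span (unitv ` (B - {x1}))"
                proof
                  fix e assume e: "e \<in> S"
                  have "\<forall>i. i \<notin> B - {x1} \<longrightarrow> w e i = 0"
                  proof (intro allI impI)
                    fix i assume i: "i \<notin> B - {x1}"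
                    show "w e i = 0"
                    proof (cases "i = x1")
                      case False then show ?thesis using i ws by simp
                    next
                      case True
                      show ?thesis
                      proof (cases "e \<in> B")
                        case True
                        then have "e \<noteq> x1" using x1 e by blast
                        then show ?thesis using wu True \<open>i = x1\<close> by (simp add: unitv_def)
                      next
                        case False
                        then show ?thesis using w_entry[OF False, of x1 \<B>] no e x1 \<open>i = x1\<close> w_def
                          by (simp add: ind_def)
                      qed
                    qed
                  qed
                  then show "w e \<in> V.span (unitv ` (B - {x1}))" using span_units[of "B - {x1}"] fB by simp
                qed
                then have "card S \<le> card (B - {x1})" using lic_bound[OF fS _ lS, of "B - {x1}" unitv] fB by simp
                moreover have "card (B - {x1}) = card B - 1" using x1 fB by simp
                moreover have "card B > 0" using x1 fB card_gt_0_iff by blast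
                ultimately show False using cS by simp
              qed
            qed
          qed
          then obtain x1 y1 where x1: "x1 \<in> B - S" and y1: "y1 \<in> S - B"
            and B2: "insert y1 (B - {x1}) \<in> \<B>" by blast
          define B2 where "B2 = insert y1 (B - {x1})"
          have B2B: "B2 \<in> \<B>" using B2 B2_def by simp
          have fB2: "finite B2" using base_fin[OF M B2B] .
          have cB2: "card B2 = card B" using card_eq[OF M B2B B] .
          have x1B: "x1 \<in> B" and y1B: "y1 \<notin> B" using x1 y1 by auto
          have w11: "w y1 x1 = 1" unfolding w_def using w_entry[OF y1B x1B, of \<B>] B2 by (simp add: ind_def)
          have "\<forall>i. i \<notin> B \<longrightarrow> w y1 i = 0" using ws by blast
          then have lB2: "lic w B2" unfolding B2_def using lic_k1[OF fB x1B y1B wu] w11 by simp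
          have SB2: "S - B2 = (S - B) - {y1}" using x1 unfolding B2_def by auto
          have kS2: "card (S - B2) = k - 1" using SB2 kS y1 fS by simp
          have "k - 1 < k" using k2 by simp
          have IH2: "S \<in> \<B> \<longleftrightarrow> lic (fund \<B> B2) S"
            using less[OF \<open>k - 1 < k\<close>, rule_format, OF B2B SE _ kS2] cS cB2 by simp
          have rep: "\<forall>e\<in>S. w e = (\<Sum>b\<in>B2. sc (fundL w B2 e b) (w b))"
            using coord[OF fB wu ws fB2 lB2 cB2] by blast
          have supp: "\<forall>e\<in>S. \<forall>b. b \<notin> B2 \<longrightarrow> fundL w B2 e b = 0" by (simp add: fundL_supp)
          have CC: "lic w S \<longleftrightarrow> lic (fundL w B2) S" using lic_change[OF lB2 fB2 fS supp rep] .
          show ?thesis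
          proof (cases "k = 2")
            case False
            then have k3: "k \<ge> 3" using k2 by simp
            have "fund \<B> B2 e = fundL w B2 e" if e: "e \<in> S" for e
            proof (cases "e \<in> B2")
              case True then show ?thesis by (simp add: fund_unit fundL_unit)
            next
              case eB2: False
              show ?thesis
              proof
                fix b
                show "fund \<B> B2 e b = fundL w B2 e b"
                proof (cases "b \<in> B2")
                  case False then show ?thesis by (simp add: fund_supp fundL_supp)
                next
                  case bB2: True
                  define D where "D = insert e (B2 - {b})"
                  have DE: "D \<subseteq> E" using D_def e SE base_sub[OF M B2B] by blast
                  have cD: "card D = card B"
                  proof -
                    have "card (B2 - {b}) = card B2 - 1" using bB2 fB2 by simp
                    moreover have "card B2 > 0" using bB2 fB2 card_gt_0_iff by blast
                    ultimately show ?thesis using D_def eB2 fB2 cB2 by simp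
                  qed
                  have "D - B \<subseteq> {e, y1}" using D_def B2_def by blast
                  then have "card (D - B) \<le> card {e, y1}" by (intro card_mono) auto
                  moreover have "card {e, y1} \<le> 2" by (cases "e = y1") auto
                  ultimately have "card (D - B) \<le> 2" by simp
                  then have lt: "card (D - B) < k" using k3 by simp
                  have "D \<in> \<B> \<longleftrightarrow> lic (fund \<B> B) D" using less[OF lt, rule_format, OF B DE cD refl] .
                  then have "D \<in> \<B> \<longleftrightarrow> lic w D" unfolding w_def .
                  then show ?thesis using eB2 bB2 D_def by (simp add: fund_def fundL_def)
                qed
              qed
            qed
            then have "lic (fund \<B> B2) S = lic (fundL w B2) S" by (rule lic_cong)
            then show ?thesis using IH2 CC w_def by simp
          next
            case True
            have "card ((B - S) - {x1}) = 1" using kB True x1 fB by simp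
            then obtain x2 where x2: "(B - S) - {x1} = {x2}" using card_1_singletonE by blast
            have "card ((S - B) - {y1}) = 1" using kS True y1 fS by simp
            then obtain y2 where y2: "(S - B) - {y1} = {y2}" using card_1_singletonE by blast
            define C where "C = B \<inter> S"
            have x2B: "x2 \<in> B" "x2 \<notin> S" "x2 \<noteq> x1" using x2 by auto
            have y2B: "y2 \<in> S" "y2 \<notin> B" "y2 \<noteq> y1" using y2 by auto
            have x1S: "x1 \<notin> S" using x1 by blast
            have y1S: "y1 \<in> S" using y1 by blast
            have d: "x1 \<noteq> x2" "x1 \<noteq> y1" "x1 \<noteq> y2" "x2 \<noteq> y1" "x2 \<noteq> y2" "y1 \<noteq> y2"
              using x2B y2B x1B y1B x1S y1S by auto
            have nC: "x1 \<notin> C" "x2 \<notin> C" "y1 \<notin> C" "y2 \<notin> C" using C_def x2B y2B x1S y1B by auto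
            have BmS: "B - S = {x1, x2}" using x2 x1 by blast
            have SmB: "S - B = {y1, y2}" using y2 y1 by blast
            have Beq: "B = pr C x1 x2"
            proof -
              have "B = (B \<inter> S) \<union> (B - S)" by blast
              then show ?thesis using BmS C_def by (auto simp: pr_def)
            qed
            have Seq: "S = pr C y1 y2"
            proof -
              have "S = (B \<inter> S) \<union> (S - B)" by blast
              then show ?thesis using SmB C_def by (auto simp: pr_def)
            qed
            have Bx1: "B - {x1} = insert x2 C" using Beq d nC by (auto simp: pr_def)
            have Bx2: "B - {x2} = insert x1 C" using Beq d nC by (auto simp: pr_def)
            have sym: "pr C a b = pr C b a" for a b by (auto simp: pr_def)
            have B2pr: "B2 = pr C x2 y1" using B2_def Bx1 by (auto simp: pr_def)
            have m11: "pr C x2 y1 \<in> \<B>" using B2B B2pr by simp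
            have BB: "pr C x1 x2 \<in> \<B>" using B Beq by simp
            have e12: "w y2 x1 = ind (pr C x2 y2 \<in> \<B>)"
              unfolding w_def using w_entry[OF y2B(2) x1B, of \<B>] Bx1 by (simp add: pr_def insert_commute)
            have e22: "w y2 x2 = ind (pr C x1 y2 \<in> \<B>)"
              unfolding w_def using w_entry[OF y2B(2) x2B(1), of \<B>] Bx2 by (simp add: pr_def insert_commute)
            have e21: "w y1 x2 = ind (pr C x1 y1 \<in> \<B>)"
              unfolding w_def using w_entry[OF y1B x2B(1), of \<B>] Bx2 by (simp add: pr_def insert_commute)
            have comb: "S \<in> \<B> \<longleftrightarrow> w y2 x2 + w y2 x1 * w y1 x2 = 1"
              using k2_comb[OF M DH d nC BB m11] Seq e12 e22 e21 by simp
            define lam where "lam = fundL w B2 y2"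
            have B2eq: "B2 = insert y1 (insert x2 C)" using B2pr by (simp add: pr_def insert_commute)
            have x2B2: "x2 \<in> B2" and y2B2: "y2 \<notin> B2" using B2eq d nC by auto
            have fC: "finite C" using fB C_def by simp
            have ev: "w y2 i = lam y1 * w y1 i + lam x2 * w x2 i" if i: "i = x1 \<or> i = x2" for i
            proof -
              have "w y2 i = (\<Sum>b\<in>B2. sc (lam b) (w b)) i" using rep y2B(1) lam_def by simp
              also have "\<dots> = (\<Sum>b\<in>B2. lam b * w b i)" by (rule sum_sc_apply)
              also have "\<dots> = lam y1 * w y1 i + (lam x2 * w x2 i + (\<Sum>b\<in>C. lam b * w b i))"
                using B2eq fC nC d by simp
              also have "(\<Sum>b\<in>C. lam b * w b i) = 0"
              proof (rule sum.neutral, rule ballI)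
                fix b assume b: "b \<in> C"
                then have "b \<in> B" "b \<noteq> i" using C_def i nC by auto
                then show "lam b * w b i = 0" using wu by (simp add: unitv_def)
              qed
              finally show ?thesis by simp
            qed
            have "w x2 x1 = 0" "w x2 x2 = 1" using wu x2B d by (auto simp: unitv_def)
            then have ev1: "w y2 x1 = lam y1" and ev2: "w y2 x2 = lam y1 * w y1 x2 + lam x2"
              using ev[of x1] ev[of x2] w11 by auto
            have lamx2: "lam x2 = w y2 x2 + w y2 x1 * w y1 x2"
              using ev1 ev2 by (simp add: add.commute bit_aba)
            have g_units: "\<forall>b\<in>B2. fundL w B2 b = unitv b" by (simp add: fundL_unit)
            have g_supp: "\<forall>i. i \<notin> B2 \<longrightarrow> fundL w B2 y2 i = 0" by (simp add: fundL_supp)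
            have S2: "S = insert y2 (B2 - {x2})" using B2eq Seq d nC by (auto simp: pr_def)
            have "lic (fundL w B2) S \<longleftrightarrow> lam x2 \<noteq> 0"
              using lic_k1[OF fB2 x2B2 y2B2 g_units g_supp] S2 lam_def by simp
            then have "lic w S \<longleftrightarrow> S \<in> \<B>" using CC comb lamx2 by simp
            then show ?thesis using w_def by simp
          qed
        qed
      qed
    qed
  qed
qed

lemma dir2:
  assumes M: "matroid_bases E \<B>" and DH: "\<forall>B1\<in>\<B>. \<forall>B2\<in>\<B>. Delta \<B> B1 B2 \<noteq> 3"
  shows "binary_matroid E \<B>"
proof -
  obtain B0 where B0: "B0 \<in> \<B>" using ne[OF M] by blast
  define w where "w = fund \<B> B0"
  have fB0: "finite B0" using base_fin[OF M B0] .
  have wu: "\<forall>b\<in>B0. w b = unitv b" unfolding w_def by (simp add: fund_unit)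
  have ws: "\<forall>e i. i \<notin> B0 \<longrightarrow> w e i = 0" unfolding w_def by (simp add: fund_supp)
  have lB0: "lic w B0" using lic_units[OF wu fB0] .
  have spB: "w x \<in> V.span (w ` B0)" for x
  proof -
    have "w ` B0 = unitv ` B0" using wu by auto
    then show ?thesis using span_units[OF fB0] ws by auto
  qed
  have MC0: "S \<in> \<B> \<longleftrightarrow> lic w S" if "S \<subseteq> E" "card S = card B0" for S
    using MC[OF M DH, rule_format, OF B0 that refl] w_def by simp
  have ext: "\<forall>S. S \<subseteq> E \<longrightarrow> lic w S \<longrightarrow> card B0 - card S = n \<longrightarrow>
      (\<exists>S'. S \<subseteq> S' \<and> S' \<subseteq> E \<and> card S' = card B0 \<and> lic w S')" for n
  proof (induction n)
    case 0
    show ?case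
    proof (intro allI impI)
      fix S assume S: "S \<subseteq> E" "lic w S" "card B0 - card S = 0"
      have fS: "finite S" using S(1) finE[OF M] finite_subset by blast
      have "card S \<le> card B0" using lic_bound[OF fS fB0 S(2)] spB by blast
      then have "card S = card B0" using S(3) by simp
      then show "\<exists>S'. S \<subseteq> S' \<and> S' \<subseteq> E \<and> card S' = card B0 \<and> lic w S'" using S by blast
    qed
  next
    case (Suc n)
    show ?case
    proof (intro allI impI)
      fix S assume S: "S \<subseteq> E" "lic w S" "card B0 - card S = Suc n"
      have fS: "finite S" using S(1) finE[OF M] finite_subset by blast
      have "\<exists>b\<in>B0. w b \<notin> V.span (w ` S)"
      proof (rule ccontr)
        assume "\<not> ?thesis"
        then have "\<forall>b\<in>B0. w b \<in> V.span (w ` S)" by blast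
        then have "card B0 \<le> card S" using lic_bound[OF fB0 fS lB0] by blast
        then show False using S(3) by simp
      qed
      then obtain b where b: "b \<in> B0" "w b \<notin> V.span (w ` S)" by blast
      have bS: "b \<notin> S" using b V.span_base by blast
      have l2: "lic w (insert b S)" using lic_insert[OF fS bS] S(2) b(2) by blast
      have E2: "insert b S \<subseteq> E" using S(1) b base_sub[OF M B0] by blast
      have "card B0 - card (insert b S) = n" using S(3) fS bS by simp
      then obtain S' where "insert b S \<subseteq> S'" "S' \<subseteq> E" "card S' = card B0" "lic w S'"
        using Suc.IH E2 l2 by blast
      then show "\<exists>S'. S \<subseteq> S' \<and> S' \<subseteq> E \<and> card S' = card B0 \<and> lic w S'" by blast
    qed
  qed
  have indw: "indep \<B> S \<longleftrightarrow> lic w S" if S: "S \<subseteq> E" for S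
  proof
    assume "indep \<B> S"
    then obtain D where D: "D \<in> \<B>" "S \<subseteq> D" unfolding indep_def by blast
    have "lic w D" using MC0[OF base_sub[OF M D(1)] card_eq[OF M D(1) B0]] D(1) by simp
    then show "lic w S" using lic_mono[OF _ D(2) base_fin[OF M D(1)]] by blast
  next
    assume "lic w S"
    then obtain S' where S': "S \<subseteq> S'" "S' \<subseteq> E" "card S' = card B0" "lic w S'"
      using ext[of "card B0 - card S", rule_format, OF S _ refl] by blast
    then have "S' \<in> \<B>" using MC0[OF S'(2,3)] by simp
    then show "indep \<B> S" using \<open>S \<subseteq> S'\<close> unfolding indep_def by blast
  qed
  obtain h where h: "bij_betw h {0..<card B0} B0" using ex_bij_betw_nat_finite[OF fB0] by blast
  define v where "v e i = (if i < card B0 then w e (h i) else 0)" for e i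
  have vw: "lic v S \<longleftrightarrow> lic w S" for S
  proof -
    have "(\<forall>i. (\<Sum>e\<in>S. c e * v e i) = 0) \<longleftrightarrow> (\<forall>j. (\<Sum>e\<in>S. c e * w e j) = 0)" for c
    proof
      assume A: "\<forall>i. (\<Sum>e\<in>S. c e * v e i) = 0"
      show "\<forall>j. (\<Sum>e\<in>S. c e * w e j) = 0"
      proof
        fix j
        show "(\<Sum>e\<in>S. c e * w e j) = 0"
        proof (cases "j \<in> B0")
          case True
          then have "j \<in> h ` {0..<card B0}" using h unfolding bij_betw_def by simp
          then obtain i where i: "i < card B0" "h i = j" by auto
          have "(\<Sum>e\<in>S. c e * w e j) = (\<Sum>e\<in>S. c e * v e i)" using i v_def by simp
          then show ?thesis using A by simp
        next
          case False then show ?thesis using ws by simp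
        qed
      qed
    next
      assume A: "\<forall>j. (\<Sum>e\<in>S. c e * w e j) = 0"
      show "\<forall>i. (\<Sum>e\<in>S. c e * v e i) = 0"
      proof
        fix i
        show "(\<Sum>e\<in>S. c e * v e i) = 0"
        proof (cases "i < card B0")
          case True then show ?thesis using A v_def by simp
        next
          case False then show ?thesis using v_def by simp
        qed
      qed
    qed
    then show ?thesis unfolding lic_def by simp
  qed
  have "\<forall>e i. card B0 \<le> i \<longrightarrow> v e i = 0" using v_def by simp
  moreover have "\<forall>S. S \<subseteq> E \<longrightarrow> (indep \<B> S \<longleftrightarrow> lin_indep_cols v S)"
    using indw vw by (simp add: lin_indep_cols_lic)
  ultimately have "(\<forall>e i. card B0 \<le> i \<longrightarrow> v e i = 0) \<and> (\<forall>S. S \<subseteq> E \<longrightarrow> (indep \<B> S \<longleftrightarrow> lin_indep_cols v S))" by blast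
  then show ?thesis unfolding binary_matroid_def representable_over_def by (intro exI[of _ "card B0"] exI[of _ v]) simp
qed

theorem theorem3p4:
  fixes E :: "'a set" and \<B> :: "'a set set"
  assumes "matroid_bases E \<B>"
  shows "binary_matroid E \<B> \<longleftrightarrow> (\<forall>B1\<in>\<B>. \<forall>B2\<in>\<B>. Delta \<B> B1 B2 \<noteq> 3)"
  using dir1[OF assms] dir2[OF assms] by blast


end
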